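(* The unique family of formal power series $(T_q^\circ)_{q\in\mathbb X}$ solving (FP) is given by $$T_q^\circ(z)=1+\sum_{n=1}^\infty\frac1{n!}\int_{\mathbb X^n}\sum_{(T,(P_i)_{0\le i\le n})\in\mathcal{TP}_n^\circ}w\big(T,(P_i)_{0\le i\le n};q,x_1,\dots,x_n\big)\,z(\mathrm dx_1)\cdots z(\mathrm dx_n),$$ i.e. $t_n(q;x_1,\dots,x_n)=\sum_{(T,(P_i))\in\mathcal{TP}_n^\circ}w(T,(P_i);q,x_1,\dots,x_n)$ for all $n\ge1$.
   Context: Setting: $(\mathbb X,\mathcal X)$ a measurable space; for $n\ge1$, $A_n:\mathbb X\times\mathbb X^n\to\mathbb C$ measurable, symmetric in the last $n$ variables. $(T_q^\circ)_{q}$ with $T_q^\circ(\nu)=1+\sum_{n\ge1}\frac1{n!}\int t_n(q;x_1,\dots,x_n)\nu(\mathrm dx_1)\cdots\nu(\mathrm dx_n)$ is the unique family of formal power series (coefficients measurable, symmetric in the $x$'s) satisfying the fixed point equation (FP) $$T_q^\circ(\nu)=\exp\Big(\sum_{n\ge1}\frac1{n!}\int A_n(q;x_1,\dots,x_n)\prod_{i=1}^nT_{x_i}^\circ(\nu)\,\nu(\mathrm dx_1)\cdots\nu(\mathrm dx_n)\Big)$$ in the sense of formal power series; equivalently, with $t_0:=1$ and $[n]=\{1,\dots,n\}$, for all $n\ge1$: $t_n(q;x_1,\dots,x_n)=\sum_{m=1}^n\sum_{\{J_1,\dots,J_m\}}\prod_{\ell=1}^mB_{\#J_\ell}(q;(x_j)_{j\in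 J_\ell})$ (sum over set partitions of $[n]$), where $B_n(q;x_1,\dots,x_n)=\sum_{\emptyset\ne J\subset[n]}A_{\#J}(q;(x_j)_{j\in J})\sum_{(V_j)_{j\in J}}\prod_{j\in J}t_{\#V_j}(x_j;(x_v)_{v\in V_j})$, the inner sum over families of pairwise disjoint, possibly empty sets $V_j$ with union $[n]\setminus J$. Enriched trees: $\mathcal{TP}_n^\circ$ is the set of pairs $(T,(P_i)_{0\le i\le n})$ where $T$ is a tree on vertex set $\{0,1,\dots,n\}$, rooted at $0$, and for each vertex $i$, $P_i$ is a set partition (into non-empty blocks) of the set of children of $i$ in $T$ ($P_i=\emptyset$ if $i$ is a leaf). Its weight is $$w(T,(P_i);x_0,x_1,\dots,x_n):=\prod_{i=0}^n\prod_{J\in P_i}A_{\#J}\big(x_i;(x_j)_{j\in J}\big),$$ with empty products equal to $1$. *)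

theory Defs
  imports Complex_Main "HOL-Library.Disjoint_Sets" "HOL-Library.Multiset"
begin

(* Conventions: points x_0 = q, x_1, ..., x_n are encoded by an index function
   y :: nat => 'a (y i = x_i).  A function of the n variables (x_j)_{j in J}
   is evaluated on the list of the x_j in increasing order of j. *)

definition args :: "(nat \<Rightarrow> 'a) \<Rightarrow> nat set \<Rightarrow> 'a list" where
  "args y J = map y (sorted_list_of_set J)"

definition tz :: "('a \<Rightarrow> 'a list \<Rightarrow> complex) \<Rightarrow> 'a \<Rightarrow> (nat \<Rightarrow> 'a) \<Rightarrow> nat set \<Rightarrow> complex" where
  "tz t p y V = (if V = {} then 1 else t p (args y V))"

definition disj_families :: "nat set \<Rightarrow> nat set \<Rightarrow> (nat \<Rightarrow> nat set) set" where
  "disj_families J R = {V. (\<forall>j. j \<notin> J \<longrightarrow> V j = {})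
      \<and> (\<forall>i\<in>J. \<forall>j\<in>J. i \<noteq> j \<longrightarrow> V i \<inter> V j = {})
      \<and> (\<Union>j\<in>J. V j) = R}"

definition Bfun :: "('a \<Rightarrow> 'a list \<Rightarrow> complex) \<Rightarrow> ('a \<Rightarrow> 'a list \<Rightarrow> complex)
    \<Rightarrow> 'a \<Rightarrow> (nat \<Rightarrow> 'a) \<Rightarrow> nat set \<Rightarrow> complex" where
  "Bfun A t q y N = (\<Sum>J\<in>{J. J \<subseteq> N \<and> J \<noteq> {}}.
      A q (args y J) * (\<Sum>V\<in>disj_families J (N - J). \<Prod>j\<in>J. tz t (y j) y (V j)))"

definition FP_rhs :: "('a \<Rightarrow> 'a list \<Rightarrow> complex) \<Rightarrow> ('a \<Rightarrow> 'a list \<Rightarrow> complex)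
    \<Rightarrow> 'a \<Rightarrow> 'a list \<Rightarrow> complex" where
  "FP_rhs A t q xs = (let y = (\<lambda>i. (q # xs) ! i) in
     (\<Sum>P\<in>{P. partition_on {1..length xs} P}. \<Prod>J\<in>P. Bfun A t q y J))"

(* Rooted trees on {0,...,n} with root 0, encoded by their parent map:
   par i is the parent of i for 1 <= i <= n; par j = 0 outside {1..n} (normalisation). *)
definition rooted_trees :: "nat \<Rightarrow> (nat \<Rightarrow> nat) set" where
  "rooted_trees n = {par. (\<forall>i\<in>{1..n}. par i \<in> {0..n} \<and> (\<exists>k. (par ^^ k) i = 0))
      \<and> (\<forall>j. j \<notin> {1..n} \<longrightarrow> par j = 0)}"

definition children :: "nat \<Rightarrow> (nat \<Rightarrow> nat) \<Rightarrow> nat \<Rightarrow> nat set" where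
  "children n par i = {j\<in>{1..n}. par j = i}"

definition enriched_trees :: "nat \<Rightarrow> ((nat \<Rightarrow> nat) \<times> (nat \<Rightarrow> nat set set)) set" where
  "enriched_trees n = {(par, P). par \<in> rooted_trees n
      \<and> (\<forall>i\<in>{0..n}. partition_on (children n par i) (P i))
      \<and> (\<forall>i. i \<notin> {0..n} \<longrightarrow> P i = {})}"

definition tree_weight :: "('a \<Rightarrow> 'a list \<Rightarrow> complex) \<Rightarrow> nat \<Rightarrow> (nat \<Rightarrow> nat set set)
    \<Rightarrow> 'a list \<Rightarrow> complex" where
  "tree_weight A n P xs0 = (\<Prod>i\<in>{0..n}. \<Prod>J\<in>P i. A (xs0 ! i) (args (\<lambda>j. xs0 ! j) J))"

end

theory Submission
  imports Defs
begin
definition edge :: "(nat \<Rightarrow> nat set set) \<Rightarrow> nat \<Rightarrow> nat \<Rightarrow> bool" where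
  "edge P i v \<longleftrightarrow> (\<exists>J\<in>P i. v \<in> J)"

definition valid :: "nat \<Rightarrow> nat set \<Rightarrow> (nat \<Rightarrow> nat set set) \<Rightarrow> bool" where
  "valid r S P \<longleftrightarrow> (\<forall>i. i \<notin> insert r S \<longrightarrow> P i = {})
     \<and> (\<forall>i. \<forall>J\<in>P i. J \<noteq> {} \<and> J \<subseteq> S)
     \<and> (\<forall>i i' J J'. J \<in> P i \<longrightarrow> J' \<in> P i' \<longrightarrow> J \<inter> J' \<noteq> {} \<longrightarrow> i = i' \<and> J = J')
     \<and> (\<forall>v\<in>S. (edge P)\<^sup>*\<^sup>* r v)"

definition GTP :: "nat \<Rightarrow> nat set \<Rightarrow> (nat \<Rightarrow> nat set set) set" where
  "GTP r S = {P. valid r S P}"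

definition BTP :: "nat \<Rightarrow> nat set \<Rightarrow> (nat \<Rightarrow> nat set set) set" where
  "BTP r S = {P. valid r S P \<and> (\<exists>J. P r = {J})}"

definition bl :: "(nat \<Rightarrow> nat set set) \<Rightarrow> (nat \<times> nat set) set" where
  "bl P = {(i,J). J \<in> P i}"

definition wt :: "(nat \<Rightarrow> nat set \<Rightarrow> complex) \<Rightarrow> (nat \<Rightarrow> nat set set) \<Rightarrow> complex" where
  "wt a P = (\<Prod>(i,J)\<in>bl P. a i J)"

lemma validD:
  assumes "valid r S P"
  shows "\<And>i. i \<notin> insert r S \<Longrightarrow> P i = {}"
    and "\<And>i J. J \<in> P i \<Longrightarrow> J \<noteq> {}"
    and "\<And>i J. J \<in> P i \<Longrightarrow> J \<subseteq> S"
    and "\<And>i i' J J'. J \<in> P i \<Longrightarrow> J' \<in> P i' \<Longrightarrow> J \<inter> J' \<noteq> {} \<Longrightarrow> i = i' \<and> J = J'"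
    and "\<And>v. v \<in> S \<Longrightarrow> (edge P)\<^sup>*\<^sup>* r v"
  using assms unfolding valid_def
     apply -
     apply (erule conjE, erule allE, erule mp, assumption)
    apply (erule conjE)+ apply (drule spec, drule bspec, assumption) apply (erule conjunct1)
   apply (erule conjE)+ apply (drule spec, drule bspec, assumption) apply (erule conjunct2)
  apply (erule conjE)+ apply (drule spec, drule spec, drule spec, drule spec, drule mp, assumption, drule mp, assumption, drule mp, assumption, assumption)
  apply (erule conjE)+ apply (drule bspec, assumption, assumption)
  done

lemma edge_mono: "(\<And>i. P i \<subseteq> P' i) \<Longrightarrow> (edge P)\<^sup>*\<^sup>* a b \<Longrightarrow> (edge P')\<^sup>*\<^sup>* a b"
proof -
  assume "\<And>i. P i \<subseteq> P' i"
  hence "edge P \<le> edge P'" unfolding edge_def le_fun_def le_bool_def by blast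
  thus "(edge P)\<^sup>*\<^sup>* a b \<Longrightarrow> (edge P')\<^sup>*\<^sup>* a b" using rtranclp_mono by blast
qed

lemma valid_edge_in: "valid r S P \<Longrightarrow> edge P i v \<Longrightarrow> v \<in> S \<and> i \<in> insert r S"
  unfolding edge_def using validD(1,3)[of r S P] by (metis empty_iff subsetD)

lemma valid_parent_unique: "valid r S P \<Longrightarrow> edge P i v \<Longrightarrow> edge P i' v \<Longrightarrow> i = i'"
  unfolding edge_def using validD(4)[of r S P] by blast

lemma valid_reach_in': "(edge P)\<^sup>*\<^sup>* a v \<Longrightarrow> valid r S P \<Longrightarrow> a \<in> S \<Longrightarrow> v \<in> S"
  by (induction rule: rtranclp_induct) (auto dest: valid_edge_in)

lemma valid_reach_in: "valid r S P \<Longrightarrow> (edge P)\<^sup>*\<^sup>* a v \<Longrightarrow> a \<in> S \<Longrightarrow> v \<in> S"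
  using valid_reach_in' by blast

lemma valid_reach_root: "valid r S P \<Longrightarrow> r \<notin> S \<Longrightarrow> (edge P)\<^sup>*\<^sup>* a r \<Longrightarrow> a = r"
  by (erule rtranclp.cases) (auto dest: valid_edge_in)

lemma valid_comparable:
  assumes "valid r S P" "(edge P)\<^sup>*\<^sup>* a v"
  shows "(edge P)\<^sup>*\<^sup>* b v \<Longrightarrow> (edge P)\<^sup>*\<^sup>* a b \<or> (edge P)\<^sup>*\<^sup>* b a"
  using assms(2)
proof (induction rule: rtranclp_induct)
  case base
  then show ?case by blast
next
  case (step u w)
  from step.prems show ?case
  proof (cases rule: rtranclp.cases)
    case rtrancl_refl
    then show ?thesis using step by auto
  next
    case (rtrancl_into_rtrancl p)
    with step valid_parent_unique[OF assms(1)] have "p = u" by blast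
    with rtrancl_into_rtrancl step show ?thesis by blast
  qed
qed

lemma valid_closed_reach:
  assumes "\<And>u w. u \<in> U \<Longrightarrow> edge P u w \<Longrightarrow> w \<in> U"
  shows "(edge P)\<^sup>*\<^sup>* a v \<Longrightarrow> a \<in> U \<Longrightarrow> v \<in> U"
  by (induction rule: rtranclp_induct) (use assms in auto)

lemma restrict_reach:
  assumes "\<And>u w. u \<in> U \<Longrightarrow> edge P u w \<Longrightarrow> w \<in> U"
    and "\<And>u. u \<in> U \<Longrightarrow> P' u = P u"
  shows "(edge P)\<^sup>*\<^sup>* a v \<Longrightarrow> a \<in> U \<Longrightarrow> (edge P')\<^sup>*\<^sup>* a v"
proof (induction rule: rtranclp_induct)
  case base
  then show ?case by simp
next
  case (step u w)
  have "u \<in> U" using valid_closed_reach[OF assms(1) step(1) step(4)] .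
  hence "edge P' u w" using step(2) assms(2) by (simp add: edge_def)
  then show ?case using step by (meson rtranclp.rtrancl_into_rtrancl)
qed

definition desc :: "(nat \<Rightarrow> nat set set) \<Rightarrow> nat \<Rightarrow> nat set" where
  "desc P c = {v. (edge P)\<^sup>*\<^sup>* c v}"

lemma desc_self: "c \<in> desc P c" by (simp add: desc_def)

lemma desc_closed: "u \<in> desc P c \<Longrightarrow> edge P u w \<Longrightarrow> w \<in> desc P c"
  by (auto simp: desc_def intro: rtranclp.rtrancl_into_rtrancl)

lemma desc_sub: "valid r S P \<Longrightarrow> c \<in> S \<Longrightarrow> desc P c \<subseteq> S"
  by (auto simp: desc_def dest: valid_reach_in)

lemma desc_not_root: "valid r S P \<Longrightarrow> r \<notin> S \<Longrightarrow> c \<in> S \<Longrightarrow> r \<notin> desc P c"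
  using desc_sub by blast

lemma desc_disj:
  assumes "valid r S P" "r \<notin> S" "edge P r c" "edge P r c'" "c \<noteq> c'"
  shows "desc P c \<inter> desc P c' = {}"
proof (rule ccontr)
  assume "desc P c \<inter> desc P c' \<noteq> {}"
  then obtain v where v: "(edge P)\<^sup>*\<^sup>* c v" "(edge P)\<^sup>*\<^sup>* c' v" by (auto simp: desc_def)
  have cS: "c \<in> S" "c' \<in> S" using assms valid_edge_in by blast+
  have gen: False if "(edge P)\<^sup>*\<^sup>* x x'" "x \<noteq> x'" "edge P r x'" "x \<in> S" for x x'
    using that(1)
  proof (cases rule: rtranclp.cases)
    case rtrancl_refl
    then show ?thesis using that by simp
  next
    case (rtrancl_into_rtrancl p)
    with that valid_parent_unique[OF assms(1)] have "p = r" by blast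
    with rtrancl_into_rtrancl have "x = r" using valid_reach_root[OF assms(1,2)] by blast
    with that assms(2) show ?thesis by simp
  qed
  from valid_comparable[OF assms(1) v] show False
    using gen[of c c'] gen[of c' c] assms cS by auto
qed

lemma desc_cover:
  assumes "valid r S P" "r \<notin> S" "v \<in> S"
  shows "\<exists>c. edge P r c \<and> v \<in> desc P c"
proof -
  have "(edge P)\<^sup>*\<^sup>* r v" using validD(5)[OF assms(1,3)] .
  then show ?thesis
  proof (cases rule: converse_rtranclpE)
    case base
    then show ?thesis using assms by simp
  next
    case (step c)
    then show ?thesis by (auto simp: desc_def)
  qed
qed

lemma desc_restrict_valid:
  assumes "valid r S P" "r \<notin> S" "edge P r c"
  shows "valid c (desc P c - {c}) (\<lambda>i. if i \<in> desc P c then P i else {})"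
proof -
  have cS: "c \<in> S" using assms valid_edge_in by blast
  let ?P' = "\<lambda>i. if i \<in> desc P c then P i else {}"
  have blk: "J \<subseteq> desc P c - {c}" if "i \<in> desc P c" "J \<in> P i" for i J
  proof
    fix v assume "v \<in> J"
    hence e: "edge P i v" using that by (auto simp: edge_def)
    hence "v \<in> desc P c" using desc_closed that by blast
    moreover have "v \<noteq> c"
    proof
      assume "v = c"
      with e assms(3) valid_parent_unique[OF assms(1)] have "i = r" by blast
      with that desc_not_root[OF assms(1,2) cS] show False by simp
    qed
    ultimately show "v \<in> desc P c - {c}" by simp
  qed
  have reach: "(edge ?P')\<^sup>*\<^sup>* c v" if "v \<in> desc P c" for v
    using restrict_reach[of "desc P c" P ?P' c v] that desc_closed desc_self
    by (auto simp: desc_def)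
  show ?thesis unfolding valid_def
  proof (intro conjI allI impI ballI)
    fix i assume "i \<notin> insert c (desc P c - {c})"
    thus "?P' i = {}" using desc_self[of c P] by auto
  next
    fix i J assume "J \<in> ?P' i"
    thus "J \<noteq> {}" using validD(2)[OF assms(1)] by (auto split: if_splits)
  next
    fix i J assume "J \<in> ?P' i"
    thus "J \<subseteq> desc P c - {c}" using blk by (auto split: if_splits)
  next
    fix i i' J J' assume "J \<in> ?P' i" "J' \<in> ?P' i'" "J \<inter> J' \<noteq> {}"
    thus "i = i'" "J = J'" using validD(4)[OF assms(1)] by (auto split: if_splits)
  next
    fix v assume "v \<in> desc P c - {c}"
    thus "(edge ?P')\<^sup>*\<^sup>* c v" using reach by simp
  qed
qed

lemma finite_GTP: "finite S \<Longrightarrow> finite (GTP r S)"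
proof -
  assume fS: "finite S"
  have "GTP r S \<subseteq> {P. \<forall>x. (x \<in> insert r S \<longrightarrow> P x \<in> Pow (Pow S)) \<and> (x \<notin> insert r S \<longrightarrow> P x = {})}"
    unfolding GTP_def using validD(1,3) by blast
  moreover have "finite \<dots>" using fS by (intro finite_set_of_finite_funs) auto
  ultimately show ?thesis by (rule finite_subset)
qed

lemma finite_BTP: "finite S \<Longrightarrow> finite (BTP r S)"
  by (rule finite_subset[OF _ finite_GTP[of S r]]) (auto simp: BTP_def GTP_def)

lemma finite_bl: "valid r S P \<Longrightarrow> finite S \<Longrightarrow> finite (bl P)"
proof -
  assume v: "valid r S P" and fS: "finite S"
  have "bl P \<subseteq> insert r S \<times> Pow S" unfolding bl_def using validD(1,3)[OF v] by blast
  thus ?thesis using fS by (meson finite_Pow_iff finite_SigmaI finite_insert finite_subset)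
qed

lemma disjD:
  assumes "V \<in> disj_families J R"
  shows "\<And>j. j \<notin> J \<Longrightarrow> V j = {}"
    and "\<And>i j. i \<in> J \<Longrightarrow> j \<in> J \<Longrightarrow> i \<noteq> j \<Longrightarrow> V i \<inter> V j = {}"
    and "(\<Union>j\<in>J. V j) = R"
    and "\<And>j. j \<in> J \<Longrightarrow> V j \<subseteq> R"
proof -
  have d: "(\<forall>j. j \<notin> J \<longrightarrow> V j = {}) \<and> (\<forall>i\<in>J. \<forall>j\<in>J. i \<noteq> j \<longrightarrow> V i \<inter> V j = {}) \<and> (\<Union>j\<in>J. V j) = R"
    using assms unfolding disj_families_def by simp
  show "\<And>j. j \<notin> J \<Longrightarrow> V j = {}" using d by simp
  show "\<And>i j. i \<in> J \<Longrightarrow> j \<in> J \<Longrightarrow> i \<noteq> j \<Longrightarrow> V i \<inter> V j = {}" using d by simp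
  show "(\<Union>j\<in>J. V j) = R" using d by simp
  show "\<And>j. j \<in> J \<Longrightarrow> V j \<subseteq> R" using d by blast
qed

lemma finite_disj: "finite R \<Longrightarrow> finite J \<Longrightarrow> finite (disj_families J R)"
proof -
  assume fR: "finite R" and fJ: "finite J"
  have "disj_families J R \<subseteq> {V. \<forall>x. (x \<in> J \<longrightarrow> V x \<in> Pow R) \<and> (x \<notin> J \<longrightarrow> V x = {})}"
    using disjD(1,4) by blast
  moreover have "finite \<dots>" using fR fJ by (intro finite_set_of_finite_funs) auto
  ultimately show ?thesis by (rule finite_subset)
qed

definition glue2 :: "nat \<Rightarrow> nat set \<Rightarrow> (nat \<Rightarrow> nat \<Rightarrow> nat set set) \<Rightarrow> nat \<Rightarrow> nat set set" where
  "glue2 r J F = (\<lambda>i. (if i = r then {J} else {}) \<union> (\<Union>j\<in>J. F j i))"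

definition D2 :: "nat set \<Rightarrow> (nat set \<times> (nat \<Rightarrow> nat set) \<times> (nat \<Rightarrow> nat \<Rightarrow> nat set set)) set" where
  "D2 N = (SIGMA J:{J. J \<subseteq> N \<and> J \<noteq> {}}. SIGMA V:disj_families J (N - J). PiE J (\<lambda>j. GTP j (V j)))"

locale d2 =
  fixes r N J V F
  assumes rN: "r \<notin> N" and JN: "J \<subseteq> N" and Jne: "J \<noteq> {}"
    and V: "V \<in> disj_families J (N - J)" and F: "F \<in> PiE J (\<lambda>j. GTP j (V j))"
begin

lemma Fv: "j \<in> J \<Longrightarrow> valid j (V j) (F j)"
  using F by (auto simp: GTP_def)

lemma VsubN: "j \<in> J \<Longrightarrow> V j \<subseteq> N - J"
  using disjD(4)[OF V] by blast

lemma Fblk: "j \<in> J \<Longrightarrow> K \<in> F j i \<Longrightarrow> i \<in> insert j (V j) \<and> K \<subseteq> V j \<and> K \<noteq> {}"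
  using validD(1,2,3)[OF Fv] by blast

lemma ins_disj: "j \<in> J \<Longrightarrow> j' \<in> J \<Longrightarrow> j \<noteq> j' \<Longrightarrow> insert j (V j) \<inter> insert j' (V j') = {}"
  using VsubN disjD(2)[OF V] by blast

lemma Fr: "j \<in> J \<Longrightarrow> F j r = {}"
  using Fblk VsubN JN rN by (metis DiffE empty_iff equals0I insertE subsetD)

lemma glue_r: "glue2 r J F r = {J}"
  using Fr by (auto simp: glue2_def)

lemma glue_in: "j \<in> J \<Longrightarrow> i \<in> insert j (V j) \<Longrightarrow> glue2 r J F i = F j i"
proof -
  assume j: "j \<in> J" and i: "i \<in> insert j (V j)"
  have "i \<noteq> r" using i j VsubN JN rN by blast
  moreover have "F j' i = {}" if "j' \<in> J" "j' \<noteq> j" for j'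
    using ins_disj[OF j that(1)] that i Fblk[OF that(1)] by blast
  ultimately show ?thesis unfolding glue2_def using j by auto
qed

lemma glue_valid: "valid r N (glue2 r J F)"
  unfolding valid_def
proof (intro conjI allI impI ballI)
  fix i assume "i \<notin> insert r N"
  thus "glue2 r J F i = {}" unfolding glue2_def using Fblk VsubN JN by fastforce
next
  fix i K assume "K \<in> glue2 r J F i"
  thus "K \<noteq> {}" unfolding glue2_def using Fblk Jne by (auto split: if_splits)
next
  fix i K assume "K \<in> glue2 r J F i"
  thus "K \<subseteq> N" unfolding glue2_def using Fblk JN VsubN by (fastforce split: if_splits)
next
  fix i i' K K' assume K: "K \<in> glue2 r J F i" and K': "K' \<in> glue2 r J F i'" and KK: "K \<inter> K' \<noteq> {}"
  have cases: "(i = r \<and> K = J) \<or> (\<exists>j\<in>J. K \<in> F j i)" if "K \<in> glue2 r J F i" for i K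
    using that unfolding glue2_def by (auto split: if_splits)
  from cases[OF K] cases[OF K'] have "i = i' \<and> K = K'"
  proof (elim disjE conjE bexE)
    fix j' assume "i = r" "K = J" "K' \<in> F j' i'" "j' \<in> J"
    thus ?thesis using KK Fblk VsubN by blast
  next
    fix j assume "i' = r" "K' = J" "K \<in> F j i" "j \<in> J"
    thus ?thesis using KK Fblk VsubN by blast
  next
    fix j j' assume a: "K \<in> F j i" "j \<in> J" "K' \<in> F j' i'" "j' \<in> J"
    have "j = j'"
    proof (rule ccontr)
      assume "j \<noteq> j'"
      hence "V j \<inter> V j' = {}" using disjD(2)[OF V] a by blast
      thus False using a KK Fblk by blast
    qed
    thus ?thesis using a KK validD(4)[OF Fv] by blast
  qed auto
  thus "i = i'" "K = K'" by auto
next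
  fix v assume v: "v \<in> N"
  have rj: "edge (glue2 r J F) r j" if "j \<in> J" for j
    using that glue_r by (auto simp: edge_def)
  show "(edge (glue2 r J F))\<^sup>*\<^sup>* r v"
  proof (cases "v \<in> J")
    case True
    then show ?thesis using rj by blast
  next
    case False
    then obtain j where j: "j \<in> J" "v \<in> V j" using disjD(3)[OF V] v by blast
    have "(edge (F j))\<^sup>*\<^sup>* j v" using validD(5)[OF Fv[OF j(1)] j(2)] .
    hence "(edge (glue2 r J F))\<^sup>*\<^sup>* j v"
      by (rule edge_mono[rotated]) (auto simp: glue2_def intro: j(1))
    thus ?thesis using rj[OF j(1)] by (meson converse_rtranclp_into_rtranclp)
  qed
qed

lemma glue_bl: "bl (glue2 r J F) = insert (r, J) (\<Union>j\<in>J. bl (F j))"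
  unfolding bl_def glue2_def using Fr by (auto split: if_splits)

lemma glue_wt: "finite N \<Longrightarrow> wt a (glue2 r J F) = a r J * (\<Prod>j\<in>J. wt a (F j))"
proof -
  assume fN: "finite N"
  have fJ: "finite J" using JN fN finite_subset by blast
  have fV: "j \<in> J \<Longrightarrow> finite (V j)" for j using VsubN fN by (meson finite_Diff finite_subset)
  have nin: "(r, J) \<notin> (\<Union>j\<in>J. bl (F j))" using Fr by (auto simp: bl_def)
  have fb: "\<forall>j\<in>J. finite (bl (F j))" using finite_bl[OF Fv fV] by blast
  have dj: "\<forall>j\<in>J. \<forall>j'\<in>J. j \<noteq> j' \<longrightarrow> bl (F j) \<inter> bl (F j') = {}"
  proof (intro ballI impI)
    fix j j' assume a: "j \<in> J" "j' \<in> J" "j \<noteq> j'"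
    hence "V j \<inter> V j' = {}" using disjD(2)[OF V] by blast
    thus "bl (F j) \<inter> bl (F j') = {}" unfolding bl_def using a Fblk by blast
  qed
  have "wt a (glue2 r J F) = a r J * (\<Prod>(i,K)\<in>(\<Union>j\<in>J. bl (F j)). a i K)"
    unfolding wt_def glue_bl using nin fb fJ by (subst prod.insert) auto
  also have "(\<Prod>(i,K)\<in>(\<Union>j\<in>J. bl (F j)). a i K) = (\<Prod>j\<in>J. wt a (F j))"
    unfolding wt_def by (rule prod.UNION_disjoint[OF fJ fb dj])
  finally show ?thesis .
qed

lemma glue_reach_in: "j \<in> J \<Longrightarrow> (edge (glue2 r J F))\<^sup>*\<^sup>* j v \<Longrightarrow> v \<in> insert j (V j)"
proof -
  assume j: "j \<in> J" and p: "(edge (glue2 r J F))\<^sup>*\<^sup>* j v"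
  show ?thesis
  proof (rule valid_closed_reach[OF _ p])
    fix u w assume u: "u \<in> insert j (V j)" and e: "edge (glue2 r J F) u w"
    then obtain K where K: "K \<in> F j u" "w \<in> K" using glue_in[OF j u] by (auto simp: edge_def)
    show "w \<in> insert j (V j)" using Fblk[OF j K(1)] K(2) by blast
  qed simp
qed

lemma V_eq: "j \<in> J \<Longrightarrow> V j = desc (glue2 r J F) j - {j}"
proof
  assume j: "j \<in> J"
  show "V j \<subseteq> desc (glue2 r J F) j - {j}"
  proof
    fix v assume v: "v \<in> V j"
    have "(edge (F j))\<^sup>*\<^sup>* j v" using validD(5)[OF Fv[OF j] v] .
    hence "(edge (glue2 r J F))\<^sup>*\<^sup>* j v"
      by (rule edge_mono[rotated]) (auto simp: glue2_def intro: j)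
    moreover have "v \<noteq> j" using v VsubN[OF j] j by blast
    ultimately show "v \<in> desc (glue2 r J F) j - {j}" by (simp add: desc_def)
  qed
next
  assume j: "j \<in> J"
  show "desc (glue2 r J F) j - {j} \<subseteq> V j"
    using glue_reach_in[OF j] by (auto simp: desc_def)
qed

lemma F_eq: "j \<in> J \<Longrightarrow> F j = (\<lambda>i. if i \<in> insert j (V j) then glue2 r J F i else {})"
proof
  fix i assume j: "j \<in> J"
  show "F j i = (if i \<in> insert j (V j) then glue2 r J F i else {})"
    using glue_in[OF j, of i] validD(1)[OF Fv[OF j], of i] by simp
qed

end

lemma D2_iff: "(J, V, F) \<in> D2 N \<longleftrightarrow> J \<subseteq> N \<and> J \<noteq> {} \<and> V \<in> disj_families J (N - J) \<and> F \<in> PiE J (\<lambda>j. GTP j (V j))"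
  unfolding D2_def by auto

lemma glue2_inj:
  assumes rN: "r \<notin> N"
  shows "inj_on (\<lambda>(J,V,F). glue2 r J F) (D2 N)"
proof (rule inj_onI)
  fix x y assume x: "x \<in> D2 N" and y: "y \<in> D2 N" and xy: "(\<lambda>(J,V,F). glue2 r J F) x = (\<lambda>(J,V,F). glue2 r J F) y"
  obtain J V F where xe: "x = (J, V, F)" by (cases x) auto
  obtain J' V' F' where ye: "y = (J', V', F')" by (cases y) auto
  have a: "(J, V, F) \<in> D2 N" "(J', V', F') \<in> D2 N" using x y xe ye by auto
  have eq: "glue2 r J F = glue2 r J' F'" using xy xe ye by simp
  interpret A: d2 r N J V F using a(1) rN by unfold_locales (auto simp: D2_iff)
  interpret B: d2 r N J' V' F' using a(2) rN by unfold_locales (auto simp: D2_iff)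
  have JJ: "J = J'" using A.glue_r B.glue_r eq by simp
  have VV: "V = V'"
  proof
    fix j show "V j = V' j"
      using A.V_eq B.V_eq eq JJ disjD(1)[OF A.V] disjD(1)[OF B.V] by (cases "j \<in> J") auto
  qed
  have FF: "F = F'"
  proof
    fix j show "F j = F' j"
    proof (cases "j \<in> J")
      case True
      have "F j = (\<lambda>i. if i \<in> insert j (V j) then glue2 r J F i else {})" by (rule A.F_eq[OF True])
      also have "\<dots> = (\<lambda>i. if i \<in> insert j (V' j) then glue2 r J' F' i else {})" by (simp only: eq VV)
      also have "\<dots> = F' j" using B.F_eq[of j] True JJ by simp
      finally show ?thesis .
    next
      case False
      then show ?thesis using A.F B.F JJ by (auto simp: PiE_def extensional_def)
    qed
  qed
  show "x = y" using JJ VV FF xe ye by simp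
qed

lemma glue2_surj:
  assumes rN: "r \<notin> N" and P: "P \<in> BTP r N"
  shows "\<exists>J V F. (J, V, F) \<in> D2 N \<and> glue2 r J F = P"
proof -
  have v: "valid r N P" using P by (simp add: BTP_def)
  obtain J where PrJ: "P r = {J}" using P by (auto simp: BTP_def)
  have Jne: "J \<noteq> {}" and JN: "J \<subseteq> N" using validD(2,3)[OF v, of J r] PrJ by auto
  have er: "edge P r c \<longleftrightarrow> c \<in> J" for c using PrJ by (simp add: edge_def)
  define V where "V = (\<lambda>j. if j \<in> J then desc P j - {j} else {})"
  define F where "F = restrict (\<lambda>j i. if i \<in> desc P j then P i else {}) J"
  have dd: "desc P i \<inter> desc P j = {}" if "i \<in> J" "j \<in> J" "i \<noteq> j" for i j
    using desc_disj[OF v rN] that er by blast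
  have V: "V \<in> disj_families J (N - J)"
    unfolding disj_families_def
  proof (intro CollectI conjI allI impI ballI)
    fix j assume "j \<notin> J" thus "V j = {}" by (simp add: V_def)
  next
    fix i j assume "i \<in> J" "j \<in> J" "i \<noteq> j"
    thus "V i \<inter> V j = {}" using dd by (auto simp: V_def)
  next
    show "(\<Union>j\<in>J. V j) = N - J"
    proof
      show "(\<Union>j\<in>J. V j) \<subseteq> N - J"
      proof
        fix w assume "w \<in> (\<Union>j\<in>J. V j)"
        then obtain j where j: "j \<in> J" "w \<in> desc P j" "w \<noteq> j" by (auto simp: V_def)
        have "w \<in> N" using desc_sub[OF v] j JN by blast
        moreover have "w \<notin> J" using dd[of w j] j desc_self[of w P] by blast
        ultimately show "w \<in> N - J" by simp
      qed
    next
      show "N - J \<subseteq> (\<Union>j\<in>J. V j)"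
      proof
        fix w assume w: "w \<in> N - J"
        then obtain c where "edge P r c" "w \<in> desc P c" using desc_cover[OF v rN] by blast
        thus "w \<in> (\<Union>j\<in>J. V j)" using w er by (auto simp: V_def)
      qed
    qed
  qed
  have F: "F \<in> PiE J (\<lambda>j. GTP j (V j))"
  proof -
    have "F j \<in> GTP j (V j)" if "j \<in> J" for j
      using desc_restrict_valid[OF v rN, of j] that er by (simp add: F_def V_def GTP_def)
    thus ?thesis by (auto simp: F_def)
  qed
  have glue: "glue2 r J F = P"
  proof
    fix i
    show "glue2 r J F i = P i"
    proof (cases "i = r")
      case True
      have "F j r = {}" if "j \<in> J" for j
        using desc_not_root[OF v rN, of j] that JN by (auto simp: F_def)
      thus ?thesis using True PrJ by (auto simp: glue2_def)
    next
      case False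
      show ?thesis
      proof (cases "i \<in> N")
        case True
        then obtain c where c: "edge P r c" "i \<in> desc P c" using desc_cover[OF v rN] by blast
        have cJ: "c \<in> J" using c er by simp
        have "F j i = (if j = c then P i else {})" if "j \<in> J" for j
          using dd[of j c] that cJ c(2) by (auto simp: F_def)
        hence "(\<Union>j\<in>J. F j i) = P i" using cJ by auto
        thus ?thesis using False by (simp add: glue2_def)
      next
        case iN: False
        have "F j i = {}" if "j \<in> J" for j
          using desc_sub[OF v, of j] that JN iN by (auto simp: F_def)
        moreover have "P i = {}" using validD(1)[OF v, of i] iN False by simp
        ultimately show ?thesis using False by (simp add: glue2_def)
      qed
    qed
  qed
  have "(J, V, F) \<in> D2 N" using Jne JN V F by (simp add: D2_iff)
  thus ?thesis using glue by blast
qed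

lemma sumSig: "finite A \<Longrightarrow> \<forall>x\<in>A. finite (B x) \<Longrightarrow> sum h (Sigma A B) = (\<Sum>x\<in>A. \<Sum>y\<in>B x. h (x,y))"
  by (subst sum.Sigma) auto

lemma L2:
  assumes rN: "r \<notin> N" and fN: "finite N"
  shows "(\<Sum>P\<in>BTP r N. wt a P) = (\<Sum>J\<in>{J. J \<subseteq> N \<and> J \<noteq> {}}. a r J *
            (\<Sum>V\<in>disj_families J (N - J). \<Prod>j\<in>J. \<Sum>P\<in>GTP j (V j). wt a P))"
proof -
  let ?g = "\<lambda>(J,V,F). glue2 r J F"
  have img: "?g ` D2 N = BTP r N"
  proof
    show "?g ` D2 N \<subseteq> BTP r N"
    proof clarify
      fix J V F assume "(J, V, F) \<in> D2 N"
      then interpret d2 r N J V F using rN by unfold_locales (auto simp: D2_iff)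
      show "glue2 r J F \<in> BTP r N" using glue_valid glue_r by (auto simp: BTP_def)
    qed
  next
    show "BTP r N \<subseteq> ?g ` D2 N"
    proof
      fix P assume "P \<in> BTP r N"
      then obtain J V F where "(J, V, F) \<in> D2 N" "glue2 r J F = P" using glue2_surj[OF rN] by blast
      hence "P = ?g (J,V,F)" by simp
      thus "P \<in> ?g ` D2 N" using \<open>(J, V, F) \<in> D2 N\<close> by (rule image_eqI)
    qed
  qed
  have "(\<Sum>P\<in>BTP r N. wt a P) = (\<Sum>x\<in>D2 N. wt a (?g x))"
    using sum.reindex[OF glue2_inj[OF rN], of "wt a"] img by simp
  also have "\<dots> = (\<Sum>(J,V,F)\<in>D2 N. a r J * (\<Prod>j\<in>J. wt a (F j)))"
  proof (rule sum.cong[OF refl], clarify)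
    fix J V F assume "(J, V, F) \<in> D2 N"
    then interpret d2 r N J V F using rN by unfold_locales (auto simp: D2_iff)
    show "wt a (glue2 r J F) = a r J * (\<Prod>j\<in>J. wt a (F j))" using glue_wt[OF fN] .
  qed
  also have "\<dots> = (\<Sum>J\<in>{J. J \<subseteq> N \<and> J \<noteq> {}}. \<Sum>V\<in>disj_families J (N - J).
                  \<Sum>F\<in>PiE J (\<lambda>j. GTP j (V j)). a r J * (\<Prod>j\<in>J. wt a (F j)))"
  proof -
    have fA: "finite {J. J \<subseteq> N \<and> J \<noteq> {}}" using fN by simp
    have fV: "finite (V j)" if "J \<subseteq> N" "V \<in> disj_families J (N - J)" "j \<in> J" for J V j
      using disjD(4)[OF that(2,3)] fN by (meson finite_Diff finite_subset)
    have fE: "finite (PiE J (\<lambda>j. GTP j (V j)))" if "J \<subseteq> N" "V \<in> disj_families J (N - J)" for J V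
      using fV[OF that] that(1) fN by (intro finite_PiE) (auto intro: finite_GTP finite_subset)
    have fC: "finite (disj_families J (N - J))" if "J \<subseteq> N" for J
      using that fN by (intro finite_disj) (auto intro: finite_subset)
    have "(\<Sum>(J,V,F)\<in>D2 N. a r J * (\<Prod>j\<in>J. wt a (F j))) =
       (\<Sum>J\<in>{J. J \<subseteq> N \<and> J \<noteq> {}}. \<Sum>(V,F)\<in>(SIGMA V:disj_families J (N - J). PiE J (\<lambda>j. GTP j (V j))). a r J * (\<Prod>j\<in>J. wt a (F j)))"
      unfolding D2_def
      by (subst sumSig) (use fA fC fE in \<open>auto intro!: finite_SigmaI\<close>)
    also have "\<dots> = (\<Sum>J\<in>{J. J \<subseteq> N \<and> J \<noteq> {}}. \<Sum>V\<in>disj_families J (N - J).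
                  \<Sum>F\<in>PiE J (\<lambda>j. GTP j (V j)). a r J * (\<Prod>j\<in>J. wt a (F j)))"
      by (rule sum.cong[OF refl], rule sum.Sigma[symmetric]) (use fC fE in auto)
    finally show ?thesis .
  qed
  also have "\<dots> = (\<Sum>J\<in>{J. J \<subseteq> N \<and> J \<noteq> {}}. a r J *
            (\<Sum>V\<in>disj_families J (N - J). \<Prod>j\<in>J. \<Sum>P\<in>GTP j (V j). wt a P))"
  proof (rule sum.cong[OF refl])
    fix J assume J: "J \<in> {J. J \<subseteq> N \<and> J \<noteq> {}}"
    have fJ: "finite J" using J fN finite_subset by blast
    show "(\<Sum>V\<in>disj_families J (N - J). \<Sum>F\<in>PiE J (\<lambda>j. GTP j (V j)). a r J * (\<Prod>j\<in>J. wt a (F j))) =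
          a r J * (\<Sum>V\<in>disj_families J (N - J). \<Prod>j\<in>J. \<Sum>P\<in>GTP j (V j). wt a P)"
      unfolding sum_distrib_left
    proof (rule sum.cong[OF refl])
      fix V assume V: "V \<in> disj_families J (N - J)"
      have fV: "j \<in> J \<Longrightarrow> finite (V j)" for j using disjD(4)[OF V] fN by (meson finite_Diff finite_subset)
      show "(\<Sum>F\<in>PiE J (\<lambda>j. GTP j (V j)). a r J * (\<Prod>j\<in>J. wt a (F j))) =
            a r J * (\<Prod>j\<in>J. \<Sum>P\<in>GTP j (V j). wt a P)"
        unfolding sum_distrib_left[symmetric]
        by (subst prod_sum_PiE) (auto simp: fJ fV finite_GTP)
    qed
  qed
  finally show ?thesis .
qed

definition glue1 :: "nat set set \<Rightarrow> (nat set \<Rightarrow> nat \<Rightarrow> nat set set) \<Rightarrow> nat \<Rightarrow> nat set set" where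
  "glue1 Q G = (\<lambda>i. \<Union>N\<in>Q. G N i)"

definition D1 :: "nat \<Rightarrow> nat set \<Rightarrow> (nat set set \<times> (nat set \<Rightarrow> nat \<Rightarrow> nat set set)) set" where
  "D1 r S = (SIGMA Q:{Q. partition_on S Q}. PiE Q (BTP r))"

lemma partition_disj: "partition_on S Q \<Longrightarrow> N \<in> Q \<Longrightarrow> N' \<in> Q \<Longrightarrow> N \<inter> N' \<noteq> {} \<Longrightarrow> N = N'"
  unfolding partition_on_def disjoint_def by blast

locale d1 =
  fixes r S Q G
  assumes rS: "r \<notin> S" and Q: "partition_on S Q" and G: "G \<in> PiE Q (BTP r)"
begin

lemma Gv: "N \<in> Q \<Longrightarrow> valid r N (G N)"
  using G by (auto simp: BTP_def)

lemma Gr: "N \<in> Q \<Longrightarrow> \<exists>J. G N r = {J}"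
proof -
  assume "N \<in> Q"
  hence "G N \<in> BTP r N" using G by (simp add: PiE_iff)
  thus ?thesis by (simp add: BTP_def)
qed

lemma NS: "N \<in> Q \<Longrightarrow> N \<subseteq> S"
  using partition_onD1[OF Q] by blast

lemma Gblk: "N \<in> Q \<Longrightarrow> K \<in> G N i \<Longrightarrow> i \<in> insert r N \<and> K \<subseteq> N \<and> K \<noteq> {}"
  using validD(1,2,3)[OF Gv] by blast

lemma glue_in: "N \<in> Q \<Longrightarrow> i \<in> N \<Longrightarrow> glue1 Q G i = G N i"
proof -
  assume N: "N \<in> Q" and i: "i \<in> N"
  have "G N' i = {}" if "N' \<in> Q" "N' \<noteq> N" for N'
  proof -
    have "i \<noteq> r" using i NS[OF N] rS by blast
    moreover have "i \<notin> N'" using partition_disj[OF Q N that(1)] i that(2) by blast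
    ultimately show ?thesis using validD(1)[OF Gv[OF that(1)]] by simp
  qed
  thus ?thesis unfolding glue1_def using N by auto
qed

lemma closed: "N \<in> Q \<Longrightarrow> u \<in> N \<Longrightarrow> edge (glue1 Q G) u w \<Longrightarrow> w \<in> N"
  using glue_in Gblk unfolding edge_def by blast

lemma glue_valid: "valid r S (glue1 Q G)"
  unfolding valid_def
proof (intro conjI allI impI ballI)
  fix i assume "i \<notin> insert r S"
  thus "glue1 Q G i = {}" unfolding glue1_def using Gblk NS by fastforce
next
  fix i K assume "K \<in> glue1 Q G i"
  thus "K \<noteq> {}" unfolding glue1_def using Gblk by blast
next
  fix i K assume "K \<in> glue1 Q G i"
  thus "K \<subseteq> S" unfolding glue1_def using Gblk NS by blast
next
  fix i i' K K' assume K: "K \<in> glue1 Q G i" and K': "K' \<in> glue1 Q G i'" and KK: "K \<inter> K' \<noteq> {}"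
  obtain N where N: "N \<in> Q" "K \<in> G N i" using K unfolding glue1_def by blast
  obtain N' where N': "N' \<in> Q" "K' \<in> G N' i'" using K' unfolding glue1_def by blast
  have "N = N'" using partition_disj[OF Q N(1) N'(1)] Gblk[OF N] Gblk[OF N'] KK by blast
  thus "i = i'" "K = K'" using validD(4)[OF Gv[OF N(1)]] N N' KK by blast+
next
  fix v assume "v \<in> S"
  then obtain N where N: "N \<in> Q" "v \<in> N" using partition_onD1[OF Q] by blast
  have "(edge (G N))\<^sup>*\<^sup>* r v" using validD(5)[OF Gv[OF N(1)] N(2)] .
  thus "(edge (glue1 Q G))\<^sup>*\<^sup>* r v"
    by (rule edge_mono[rotated]) (auto simp: glue1_def intro: N(1))
qed

lemma glue_wt: "finite S \<Longrightarrow> wt a (glue1 Q G) = (\<Prod>N\<in>Q. wt a (G N))"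
proof -
  assume fS: "finite S"
  have fQ: "finite Q" using partition_onD1[OF Q] fS by (metis finite_UnionD)
  have fb: "\<forall>N\<in>Q. finite (bl (G N))" using finite_bl[OF Gv] NS fS by (meson finite_subset)
  have dj: "\<forall>N\<in>Q. \<forall>N'\<in>Q. N \<noteq> N' \<longrightarrow> bl (G N) \<inter> bl (G N') = {}"
  proof (intro ballI impI)
    fix N N' assume a: "N \<in> Q" "N' \<in> Q" "N \<noteq> N'"
    show "bl (G N) \<inter> bl (G N') = {}"
    proof (rule ccontr)
      assume "bl (G N) \<inter> bl (G N') \<noteq> {}"
      then obtain i K where "K \<in> G N i" "K \<in> G N' i" unfolding bl_def by blast
      thus False using Gblk[OF a(1)] Gblk[OF a(2)] partition_disj[OF Q a(1,2)] a(3) by blast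
    qed
  qed
  have "bl (glue1 Q G) = (\<Union>N\<in>Q. bl (G N))" unfolding bl_def glue1_def by blast
  thus ?thesis unfolding wt_def using prod.UNION_disjoint[OF fQ fb dj] by simp
qed

lemma G_eq: "N \<in> Q \<Longrightarrow> G N = (\<lambda>i. if i \<in> N then glue1 Q G i else if i = r then {K \<in> glue1 Q G r. K \<subseteq> N} else {})"
proof
  fix i assume N: "N \<in> Q"
  show "G N i = (if i \<in> N then glue1 Q G i else if i = r then {K \<in> glue1 Q G r. K \<subseteq> N} else {})"
  proof (cases "i \<in> N")
    case True
    then show ?thesis using glue_in[OF N] by simp
  next
    case False
    show ?thesis
    proof (cases "i = r")
      case True
      have "G N r = {K \<in> glue1 Q G r. K \<subseteq> N}"
      proof
        show "G N r \<subseteq> {K \<in> glue1 Q G r. K \<subseteq> N}" using Gblk[OF N] N unfolding glue1_def by blast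
        show "{K \<in> glue1 Q G r. K \<subseteq> N} \<subseteq> G N r"
        proof clarify
          fix K assume K: "K \<in> glue1 Q G r" "K \<subseteq> N"
          then obtain N' where N': "N' \<in> Q" "K \<in> G N' r" unfolding glue1_def by blast
          have "N' = N" using Gblk[OF N'] K(2) partition_disj[OF Q N'(1) N] by blast
          thus "K \<in> G N r" using N' by simp
        qed
      qed
      thus ?thesis using True False by simp
    next
      case False
      thus ?thesis using \<open>i \<notin> N\<close> validD(1)[OF Gv[OF N]] by simp
    qed
  qed
qed

end

lemma d1_sub:
  assumes A: "d1 r S Q G" and B: "d1 r S Q' G'" and eq: "glue1 Q G = glue1 Q' G'"
    and N: "N \<in> Q" and N': "N' \<in> Q'" and rr: "G N r = G' N' r"
  shows "N \<subseteq> N'"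
proof
  interpret A: d1 r S Q G by (rule A)
  interpret B: d1 r S Q' G' by (rule B)
  fix v assume v: "v \<in> N"
  have "(edge (G N))\<^sup>*\<^sup>* r v" using validD(5)[OF A.Gv[OF N] v] .
  then show "v \<in> N'"
  proof (cases rule: converse_rtranclpE)
    case base
    then show ?thesis using v A.NS[OF N] A.rS by blast
  next
    case (step c)
    have cN': "c \<in> N'" using step(1) rr B.Gblk[OF N'] unfolding edge_def by blast
    have "(edge (glue1 Q G))\<^sup>*\<^sup>* c v"
      by (rule edge_mono[OF _ step(2)]) (auto simp: glue1_def intro: N)
    hence "(edge (glue1 Q' G'))\<^sup>*\<^sup>* c v" using eq by simp
    thus ?thesis using valid_closed_reach[of N' "glue1 Q' G'" c v] B.closed[OF N'] cN' by blast
  qed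
qed

lemma D1_iff: "(Q, G) \<in> D1 r S \<longleftrightarrow> partition_on S Q \<and> G \<in> PiE Q (BTP r)"
  unfolding D1_def by auto

lemma glue1_inj:
  assumes rS: "r \<notin> S"
  shows "inj_on (\<lambda>(Q,G). glue1 Q G) (D1 r S)"
proof (rule inj_onI)
  fix x y assume x: "x \<in> D1 r S" and y: "y \<in> D1 r S" and xy: "(\<lambda>(Q,G). glue1 Q G) x = (\<lambda>(Q,G). glue1 Q G) y"
  obtain Q G where xe: "x = (Q, G)" by (cases x) auto
  obtain Q' G' where ye: "y = (Q', G')" by (cases y) auto
  have A: "d1 r S Q G" using x xe rS by unfold_locales (auto simp: D1_iff)
  have B: "d1 r S Q' G'" using y ye rS by unfold_locales (auto simp: D1_iff)
  interpret A: d1 r S Q G by (rule A)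
  interpret B: d1 r S Q' G' by (rule B)
  have eq: "glue1 Q G = glue1 Q' G'" using xy xe ye by simp
  have sub: "Q1 \<subseteq> Q2" if C1: "d1 r S Q1 G1" and C2: "d1 r S Q2 G2" and e: "glue1 Q1 G1 = glue1 Q2 G2" for Q1 G1 Q2 G2
  proof
    interpret C1: d1 r S Q1 G1 by (rule C1)
    interpret C2: d1 r S Q2 G2 by (rule C2)
    fix N assume N: "N \<in> Q1"
    obtain J where J: "G1 N r = {J}" using C1.Gr[OF N] by blast
    have "J \<in> glue1 Q2 G2 r" using J N e[symmetric] unfolding glue1_def by (metis UN_iff singletonI)
    then obtain N' where N': "N' \<in> Q2" "J \<in> G2 N' r" unfolding glue1_def by blast
    have rr: "G1 N r = G2 N' r" using J N' C2.Gr[OF N'(1)] by auto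
    have "N \<subseteq> N'" using d1_sub[OF C1 C2 e N N'(1) rr] .
    moreover have "N' \<subseteq> N" using d1_sub[OF C2 C1 e[symmetric] N'(1) N rr[symmetric]] .
    ultimately show "N \<in> Q2" using N' by simp
  qed
  have QQ: "Q = Q'" using sub[OF A B eq] sub[OF B A eq[symmetric]] by blast
  have GG: "G = G'"
  proof
    fix N show "G N = G' N"
    proof (cases "N \<in> Q")
      case True
      have "G N = (\<lambda>i. if i \<in> N then glue1 Q G i else if i = r then {K \<in> glue1 Q G r. K \<subseteq> N} else {})"
        by (rule A.G_eq[OF True])
      also have "\<dots> = (\<lambda>i. if i \<in> N then glue1 Q' G' i else if i = r then {K \<in> glue1 Q' G' r. K \<subseteq> N} else {})"
        by (simp only: eq)
      also have "\<dots> = G' N" using B.G_eq[of N] True QQ by simp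
      finally show ?thesis .
    next
      case False
      then show ?thesis using A.G B.G QQ by (auto simp: PiE_def extensional_def)
    qed
  qed
  show "x = y" using QQ GG xe ye by simp
qed

lemma glue1_surj:
  assumes rS: "r \<notin> S" and v: "valid r S P"
  shows "\<exists>Q G. (Q, G) \<in> D1 r S \<and> glue1 Q G = P"
proof -
  define cmp where "cmp K = (\<Union>c\<in>K. desc P c)" for K
  have er: "edge P r c \<longleftrightarrow> (\<exists>K\<in>P r. c \<in> K)" for c by (simp add: edge_def)
  have Kc: "K \<subseteq> cmp K" for K using desc_self unfolding cmp_def by fast
  have cS: "cmp K \<subseteq> S" if "K \<in> P r" for K
    using desc_sub[OF v] validD(3)[OF v that] unfolding cmp_def by blast
  have cdisj: "K = K'" if th: "K \<in> P r" "K' \<in> P r" "cmp K \<inter> cmp K' \<noteq> {}" for K K'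
  proof -
    obtain w c c' where w: "c \<in> K" "c' \<in> K'" "w \<in> desc P c" "w \<in> desc P c'"
      using th(3) unfolding cmp_def by blast
    have "c = c'"
      using desc_disj[OF v rS, of c c'] w th(1,2) er by blast
    thus ?thesis using validD(4)[OF v th(1,2)] w by blast
  qed
  have cclosed: "u \<in> cmp K \<Longrightarrow> edge P u w \<Longrightarrow> w \<in> cmp K" for K u w
    using desc_closed unfolding cmp_def by blast
  define Q where "Q = cmp ` P r"
  define G where "G = restrict (\<lambda>N i. if i \<in> N then P i else if i = r then {K \<in> P r. K \<subseteq> N} else {}) Q"
  have Q: "partition_on S Q"
  proof (rule partition_onI)
    show "\<Union>Q = S"
    proof
      show "\<Union>Q \<subseteq> S" using cS unfolding Q_def by blast
      show "S \<subseteq> \<Union>Q"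
      proof
        fix w assume "w \<in> S"
        then obtain c where "edge P r c" "w \<in> desc P c" using desc_cover[OF v rS] by blast
        then obtain K where "K \<in> P r" "c \<in> K" "w \<in> desc P c" using er by blast
        thus "w \<in> \<Union>Q" unfolding Q_def cmp_def by blast
      qed
    qed
  next
    fix p q assume "p \<in> Q" "q \<in> Q" "p \<noteq> q"
    thus "disjnt p q" using cdisj unfolding Q_def disjnt_def by blast
  next
    show "{} \<notin> Q" using Kc validD(2)[OF v] unfolding Q_def by blast
  qed
  have single: "{K' \<in> P r. K' \<subseteq> cmp K} = {K}" if "K \<in> P r" for K
  proof
    show "{K' \<in> P r. K' \<subseteq> cmp K} \<subseteq> {K}"
    proof clarify
      fix K' assume K': "K' \<in> P r" "K' \<subseteq> cmp K"
      have "cmp K' \<inter> cmp K \<noteq> {}" using Kc[of K'] K' validD(2)[OF v K'(1)] by blast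
      thus "K' = K" using cdisj K'(1) that by blast
    qed
    show "{K} \<subseteq> {K' \<in> P r. K' \<subseteq> cmp K}" using that Kc by blast
  qed
  have GB: "G N \<in> BTP r N" if NQ: "N \<in> Q" for N
  proof -
    obtain K where K: "K \<in> P r" "N = cmp K" using NQ unfolding Q_def by blast
    have rN: "r \<notin> N" using cS[OF K(1)] K(2) rS by blast
    have "G N = (\<lambda>i. if i \<in> N then P i else if i = r then {K' \<in> P r. K' \<subseteq> N} else {})"
      using NQ by (simp add: G_def)
    also have "\<dots> = (\<lambda>i. if i \<in> N then P i else if i = r then {K} else {})"
      by (simp only: K(2) single[OF K(1)])
    finally have GN: "G N = (\<lambda>i. if i \<in> N then P i else if i = r then {K} else {})" .
    have val: "valid r N (G N)"
      unfolding valid_def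
    proof (intro conjI allI impI ballI)
      fix i assume "i \<notin> insert r N" thus "G N i = {}" using GN by simp
    next
      fix i K' assume "K' \<in> G N i"
      thus "K' \<noteq> {}" using GN validD(2)[OF v] K(1) by (auto split: if_splits)
    next
      fix i K' assume a: "K' \<in> G N i"
      show "K' \<subseteq> N"
      proof (cases "i \<in> N")
        case True
        hence "K' \<in> P i" using a GN by simp
        thus ?thesis using cclosed[of i K] True K(2) unfolding edge_def by blast
      next
        case False
        thus ?thesis using a GN Kc K(2) by (auto split: if_splits)
      qed
    next
      fix i i' K1 K2 assume "K1 \<in> G N i" "K2 \<in> G N i'" "K1 \<inter> K2 \<noteq> {}"
      hence "K1 \<in> P i" "K2 \<in> P i'" "K1 \<inter> K2 \<noteq> {}" using GN K(1) by (auto split: if_splits)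
      thus "i = i'" "K1 = K2" using validD(4)[OF v] by blast+
    next
      fix w assume w: "w \<in> N"
      then obtain c where c: "c \<in> K" "(edge P)\<^sup>*\<^sup>* c w" using K(2) unfolding cmp_def desc_def by blast
      have cN: "c \<in> N" using c(1) Kc K(2) by blast
      have "(edge (G N))\<^sup>*\<^sup>* c w"
        using restrict_reach[of N P "G N" c w] cclosed[of _ K] K(2) GN c(2) cN by auto
      moreover have "edge (G N) r c" using GN rN c(1) by (simp add: edge_def)
      ultimately show "(edge (G N))\<^sup>*\<^sup>* r w" by (meson converse_rtranclp_into_rtranclp)
    qed
    show ?thesis using val GN rN by (auto simp: BTP_def)
  qed
  have G: "G \<in> PiE Q (BTP r)" using GB unfolding G_def by auto
  have glue: "glue1 Q G = P"
  proof
    fix i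
    show "glue1 Q G i = P i"
    proof (cases "i \<in> S")
      case True
      then obtain N where N: "N \<in> Q" "i \<in> N" using partition_onD1[OF Q] by blast
      have "G N' i = (if N' = N then P i else {})" if "N' \<in> Q" for N'
      proof -
        have "i \<noteq> r" using True rS by blast
        moreover have "i \<in> N' \<longleftrightarrow> N' = N" using partition_disj[OF Q N(1) that] N by blast
        ultimately show ?thesis using that unfolding G_def by auto
      qed
      thus ?thesis using N unfolding glue1_def by auto
    next
      case False
      show ?thesis
      proof (cases "i = r")
        case True
        have "(\<Union>N\<in>Q. G N r) = P r"
        proof
          show "(\<Union>N\<in>Q. G N r) \<subseteq> P r" using rS cS unfolding G_def Q_def by auto
          show "P r \<subseteq> (\<Union>N\<in>Q. G N r)"
          proof
            fix K assume K: "K \<in> P r"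
            have "K \<in> G (cmp K) r" using K single[OF K] cS[OF K] rS unfolding G_def Q_def by auto
            thus "K \<in> (\<Union>N\<in>Q. G N r)" using K unfolding Q_def by blast
          qed
        qed
        thus ?thesis using True unfolding glue1_def by simp
      next
        case False
        have "G N i = {}" if "N \<in> Q" for N
          using that \<open>i \<notin> S\<close> False partition_onD1[OF Q] unfolding G_def by auto
        moreover have "P i = {}" using validD(1)[OF v] False \<open>i \<notin> S\<close> by simp
        ultimately show ?thesis unfolding glue1_def by simp
      qed
    qed
  qed
  show ?thesis using Q G glue by (auto simp: D1_iff)
qed

lemma L1:
  assumes rS: "r \<notin> S" and fS: "finite S"
  shows "(\<Sum>P\<in>GTP r S. wt a P) = (\<Sum>Q\<in>{Q. partition_on S Q}. \<Prod>N\<in>Q. \<Sum>P\<in>BTP r N. wt a P)"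
proof -
  let ?g = "\<lambda>(Q,G). glue1 Q G"
  have img: "?g ` D1 r S = GTP r S"
  proof
    show "?g ` D1 r S \<subseteq> GTP r S"
    proof clarify
      fix Q G assume "(Q, G) \<in> D1 r S"
      then interpret d1 r S Q G using rS by unfold_locales (auto simp: D1_iff)
      show "glue1 Q G \<in> GTP r S" using glue_valid by (auto simp: GTP_def)
    qed
  next
    show "GTP r S \<subseteq> ?g ` D1 r S"
    proof
      fix P assume "P \<in> GTP r S"
      hence "valid r S P" by (simp add: GTP_def)
      then obtain Q G where "(Q, G) \<in> D1 r S" "glue1 Q G = P" using glue1_surj[OF rS] by blast
      hence "P = ?g (Q,G)" by simp
      thus "P \<in> ?g ` D1 r S" using \<open>(Q, G) \<in> D1 r S\<close> by (rule image_eqI)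
    qed
  qed
  have fP: "finite {Q. partition_on S Q}"
    by (rule finite_subset[of _ "Pow (Pow S)"]) (auto simp: fS partition_on_def)
  have fQ: "finite Q" if "partition_on S Q" for Q using that fS partition_onD1 by (metis finite_UnionD)
  have fN: "finite N" if "partition_on S Q" "N \<in> Q" for Q N using that fS partition_onD1 by (metis Union_upper finite_subset)
  have "(\<Sum>P\<in>GTP r S. wt a P) = (\<Sum>x\<in>D1 r S. wt a (?g x))"
    using sum.reindex[OF glue1_inj[OF rS], of "wt a"] img by simp
  also have "\<dots> = (\<Sum>(Q,G)\<in>D1 r S. \<Prod>N\<in>Q. wt a (G N))"
  proof (rule sum.cong[OF refl], clarify)
    fix Q G assume "(Q, G) \<in> D1 r S"
    then interpret d1 r S Q G using rS by unfold_locales (auto simp: D1_iff)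
    show "wt a (glue1 Q G) = (\<Prod>N\<in>Q. wt a (G N))" using glue_wt[OF fS] .
  qed
  also have "\<dots> = (\<Sum>Q\<in>{Q. partition_on S Q}. \<Sum>G\<in>PiE Q (BTP r). \<Prod>N\<in>Q. wt a (G N))"
    unfolding D1_def using fP fQ fN by (subst sumSig) (auto intro!: finite_PiE finite_BTP)
  also have "\<dots> = (\<Sum>Q\<in>{Q. partition_on S Q}. \<Prod>N\<in>Q. \<Sum>P\<in>BTP r N. wt a P)"
    using fQ fN by (intro sum.cong[OF refl]) (subst prod_sum_PiE, auto intro: finite_BTP)
  finally show ?thesis .
qed

lemma msl: "mset (sorted_list_of_set A) = mset_set A"
  by (metis mset_sorted_list_of_multiset sorted_list_of_mset_set)

lemma args_img: "inj_on h J \<Longrightarrow> mset (args (y \<circ> h) J) = mset (args y (h ` J))"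
proof -
  assume "inj_on h J"
  hence "mset_set (h ` J) = image_mset h (mset_set J)" by (simp add: image_mset_mset_set)
  thus ?thesis unfolding args_def by (simp add: msl multiset.map_comp)
qed

lemma args_local: "finite K \<Longrightarrow> (\<And>i. i \<in> K \<Longrightarrow> y i = y' i) \<Longrightarrow> args y K = args y' K"
  unfolding args_def by (rule map_cong) auto

lemma Bfun_local:
  assumes fN: "finite N" and yy: "\<And>i. i \<in> N \<Longrightarrow> y i = y' i"
  shows "Bfun A t q y N = Bfun A t q y' N"
  unfolding Bfun_def
proof (rule sum.cong[OF refl])
  fix J assume J: "J \<in> {J. J \<subseteq> N \<and> J \<noteq> {}}"
  have fJ: "finite J" using J fN finite_subset by blast
  have "args y J = args y' J" using J yy fJ by (intro args_local) auto
  moreover have "(\<Sum>V\<in>disj_families J (N - J). \<Prod>j\<in>J. tz t (y j) y (V j)) =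
                 (\<Sum>V\<in>disj_families J (N - J). \<Prod>j\<in>J. tz t (y' j) y' (V j))"
  proof (intro sum.cong[OF refl] prod.cong[OF refl])
    fix V j assume V: "V \<in> disj_families J (N - J)" and j: "j \<in> J"
    have VN: "V j \<subseteq> N" using disjD(4)[OF V j] by blast
    have "args y (V j) = args y' (V j)" using VN yy fN by (intro args_local) (auto intro: finite_subset)
    moreover have "y j = y' j" using j J yy by blast
    ultimately show "tz t (y j) y (V j) = tz t (y' j) y' (V j)" by (simp add: tz_def)
  qed
  ultimately show "A q (args y J) * (\<Sum>V\<in>disj_families J (N - J). \<Prod>j\<in>J. tz t (y j) y (V j)) =
         A q (args y' J) * (\<Sum>V\<in>disj_families J (N - J). \<Prod>j\<in>J. tz t (y' j) y' (V j))" by simp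
qed

lemma Bfun_img:
  assumes symA: "\<forall>q xs ys. mset xs = mset ys \<longrightarrow> A q xs = A q ys"
    and symt: "\<forall>q xs ys. mset xs = mset ys \<longrightarrow> t q xs = t q ys"
    and fN: "finite N" and inj: "inj_on h N"
  shows "Bfun A t q (y \<circ> h) N = Bfun A t q y (h ` N)"
proof -
  define g where "g = the_inv_into N h"
  have gh: "x \<in> N \<Longrightarrow> g (h x) = x" for x using the_inv_into_f_f[OF inj] by (simp add: g_def)
  have hg: "k \<in> h ` N \<Longrightarrow> h (g k) = k" for k using f_the_inv_into_f[OF inj] by (simp add: g_def)
  have gN: "k \<in> h ` N \<Longrightarrow> g k \<in> N" for k using gh by auto
  have ghX: "X \<subseteq> N \<Longrightarrow> g ` h ` X = X" for X using gh by (force simp: image_image)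
  have hgY: "Y \<subseteq> h ` N \<Longrightarrow> h ` g ` Y = Y" for Y using hg by (force simp: image_image)
  have injP: "inj_on (image h) {J. J \<subseteq> N \<and> J \<noteq> {}}"
    using inj_on_image_Pow[OF inj] by (rule inj_on_subset) auto
  have imgP: "image h ` {J. J \<subseteq> N \<and> J \<noteq> {}} = {J'. J' \<subseteq> h ` N \<and> J' \<noteq> {}}"
  proof
    show "image h ` {J. J \<subseteq> N \<and> J \<noteq> {}} \<subseteq> {J'. J' \<subseteq> h ` N \<and> J' \<noteq> {}}" by auto
    show "{J'. J' \<subseteq> h ` N \<and> J' \<noteq> {}} \<subseteq> image h ` {J. J \<subseteq> N \<and> J \<noteq> {}}"
    proof clarify
      fix J' assume J': "J' \<subseteq> h ` N" "J' \<noteq> {}"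
      have "J' = h ` (g ` J')" using hgY[OF J'(1)] by simp
      moreover have "g ` J' \<subseteq> N" "g ` J' \<noteq> {}" using gN J' by auto
      ultimately show "J' \<in> image h ` {J. J \<subseteq> N \<and> J \<noteq> {}}" by blast
    qed
  qed
  have inner: "(\<Sum>V\<in>disj_families J (N - J). \<Prod>j\<in>J. tz t ((y \<circ> h) j) (y \<circ> h) (V j)) =
       (\<Sum>V'\<in>disj_families (h ` J) (h ` N - h ` J). \<Prod>k\<in>h ` J. tz t (y k) y (V' k))"
    if J: "J \<subseteq> N" for J
  proof (rule sum.reindex_bij_witness[where j = "\<lambda>V k. if k \<in> h ` J then h ` V (g k) else {}"
                                        and i = "\<lambda>V' j. if j \<in> J then g ` V' (h j) else {}"])
    fix V assume V: "V \<in> disj_families J (N - J)"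
    have VN: "j \<in> J \<Longrightarrow> V j \<subseteq> N" for j using disjD(4)[OF V] by blast
    show "(\<lambda>j. if j \<in> J then g ` (if h j \<in> h ` J then h ` V (g (h j)) else {}) else {}) = V"
    proof
      fix j show "(if j \<in> J then g ` (if h j \<in> h ` J then h ` V (g (h j)) else {}) else {}) = V j"
      proof (cases "j \<in> J")
        case True
        have "g (h j) = j" using gh J True by blast
        thus ?thesis using True ghX[OF VN[OF True]] by simp
      next
        case False
        thus ?thesis using disjD(1)[OF V, of j] by simp
      qed
    qed
    show "(\<lambda>k. if k \<in> h ` J then h ` V (g k) else {}) \<in> disj_families (h ` J) (h ` N - h ` J)"
      unfolding disj_families_def
    proof (intro CollectI conjI allI impI ballI)
      fix k assume "k \<notin> h ` J" thus "(if k \<in> h ` J then h ` V (g k) else {}) = {}" by simp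
    next
      fix k1 k2 assume k: "k1 \<in> h ` J" "k2 \<in> h ` J" "k1 \<noteq> k2"
      then obtain j1 j2 where j: "j1 \<in> J" "j2 \<in> J" "k1 = h j1" "k2 = h j2" by blast
      have "j1 \<noteq> j2" using j k by blast
      hence "V j1 \<inter> V j2 = {}" using disjD(2)[OF V j(1,2)] by blast
      hence "h ` V j1 \<inter> h ` V j2 = {}" using VN j(1,2) inj_on_image_Int[OF inj, of "V j1" "V j2"] by simp
      moreover have "g (h j1) = j1" "g (h j2) = j2" using gh J j(1,2) by blast+
      ultimately show "(if k1 \<in> h ` J then h ` V (g k1) else {}) \<inter> (if k2 \<in> h ` J then h ` V (g k2) else {}) = {}"
        using k j by simp
    next
      have "(\<Union>k\<in>h ` J. (if k \<in> h ` J then h ` V (g k) else {})) = (\<Union>j\<in>J. h ` V (g (h j)))"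
        by auto
      also have "\<dots> = (\<Union>j\<in>J. h ` V j)"
      proof (rule SUP_cong[OF refl])
        fix j assume "j \<in> J" thus "h ` V (g (h j)) = h ` V j" using gh J by auto
      qed
      also have "\<dots> = h ` (\<Union>j\<in>J. V j)" by blast
      also have "\<dots> = h ` (N - J)" using disjD(3)[OF V] by simp
      also have "\<dots> = h ` N - h ` J" using inj J by (simp add: inj_on_image_set_diff)
      finally show "(\<Union>k\<in>h ` J. (if k \<in> h ` J then h ` V (g k) else {})) = h ` N - h ` J" .
    qed
    have "(\<Prod>k\<in>h ` J. tz t (y k) y (if k \<in> h ` J then h ` V (g k) else {})) =
          (\<Prod>j\<in>J. tz t (y (h j)) y (h ` V j))"
      using inj_on_subset[OF inj J] gh J by (subst prod.reindex) (auto intro!: prod.cong)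
    also have "\<dots> = (\<Prod>j\<in>J. tz t ((y \<circ> h) j) (y \<circ> h) (V j))"
    proof (rule prod.cong[OF refl])
      fix j assume j: "j \<in> J"
      have "mset (args (y \<circ> h) (V j)) = mset (args y (h ` V j))"
        using inj_on_subset[OF inj VN[OF j]] by (rule args_img)
      hence "t (y (h j)) (args y (h ` V j)) = t (y (h j)) (args (y \<circ> h) (V j))"
        using symt[rule_format] by metis
      thus "tz t (y (h j)) y (h ` V j) = tz t ((y \<circ> h) j) (y \<circ> h) (V j)"
        unfolding tz_def by simp
    qed
    finally show "(\<Prod>k\<in>h ` J. tz t (y k) y (if k \<in> h ` J then h ` V (g k) else {})) =
          (\<Prod>j\<in>J. tz t ((y \<circ> h) j) (y \<circ> h) (V j))" .
  next
    fix V' assume V': "V' \<in> disj_families (h ` J) (h ` N - h ` J)"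
    have VN: "k \<in> h ` J \<Longrightarrow> V' k \<subseteq> h ` N" for k using disjD(4)[OF V'] by blast
    have hJ: "k \<in> h ` J \<Longrightarrow> k \<in> h ` N" for k using J by blast
    show "(\<lambda>k. if k \<in> h ` J then h ` (if g k \<in> J then g ` V' (h (g k)) else {}) else {}) = V'"
    proof
      fix k show "(if k \<in> h ` J then h ` (if g k \<in> J then g ` V' (h (g k)) else {}) else {}) = V' k"
      proof (cases "k \<in> h ` J")
        case True
        have "g k \<in> J" using True gh J by auto
        moreover have "h (g k) = k" using hg hJ True by blast
        ultimately show ?thesis using True hgY[OF VN[OF True]] by simp
      next
        case False
        then show ?thesis using disjD(1)[OF V'] by simp
      qed
    qed
    show "(\<lambda>j. if j \<in> J then g ` V' (h j) else {}) \<in> disj_families J (N - J)"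
      unfolding disj_families_def
    proof (intro CollectI conjI allI impI ballI)
      fix j assume "j \<notin> J" thus "(if j \<in> J then g ` V' (h j) else {}) = {}" by simp
    next
      fix j1 j2 assume j: "j1 \<in> J" "j2 \<in> J" "j1 \<noteq> j2"
      have "h j1 \<noteq> h j2" using inj j J by (meson inj_onD subsetD)
      hence "V' (h j1) \<inter> V' (h j2) = {}" using disjD(2)[OF V'] j by blast
      moreover have "inj_on g (h ` N)" using hg by (metis inj_on_inverseI)
      ultimately have "g ` V' (h j1) \<inter> g ` V' (h j2) = {}"
        using VN j inj_on_image_Int[of g "h ` N" "V' (h j1)" "V' (h j2)"] J by auto
      thus "(if j1 \<in> J then g ` V' (h j1) else {}) \<inter> (if j2 \<in> J then g ` V' (h j2) else {}) = {}"
        using j by simp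
    next
      have "(\<Union>j\<in>J. (if j \<in> J then g ` V' (h j) else {})) = g ` (\<Union>k\<in>h ` J. V' k)" by auto
      also have "\<dots> = g ` (h ` N - h ` J)" using disjD(3)[OF V'] by simp
      also have "\<dots> = g ` h ` (N - J)" using inj J by (simp add: inj_on_image_set_diff)
      also have "\<dots> = N - J" using ghX by simp
      finally show "(\<Union>j\<in>J. (if j \<in> J then g ` V' (h j) else {})) = N - J" .
    qed
  qed
  have "Bfun A t q y (h ` N) = (\<Sum>J\<in>{J. J \<subseteq> N \<and> J \<noteq> {}}. A q (args y (h ` J)) *
      (\<Sum>V'\<in>disj_families (h ` J) (h ` N - h ` J). \<Prod>k\<in>h ` J. tz t (y k) y (V' k)))"
    unfolding Bfun_def imgP[symmetric] using sum.reindex[OF injP] by simp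
  also have "\<dots> = Bfun A t q (y \<circ> h) N"
    unfolding Bfun_def
  proof (rule sum.cong[OF refl])
    fix J assume J: "J \<in> {J. J \<subseteq> N \<and> J \<noteq> {}}"
    have m: "mset (args (y \<circ> h) J) = mset (args y (h ` J))"
      using args_img[OF inj_on_subset[OF inj], of J y] J by blast
    have eA: "A q (args y (h ` J)) = A q (args (y \<circ> h) J)"
      using symA[rule_format, OF m[symmetric]] .
    have eI: "(\<Sum>V'\<in>disj_families (h ` J) (h ` N - h ` J). \<Prod>k\<in>h ` J. tz t (y k) y (V' k)) =
       (\<Sum>V\<in>disj_families J (N - J). \<Prod>j\<in>J. tz t ((y \<circ> h) j) (y \<circ> h) (V j))"
    proof -
      have "J \<subseteq> N" using J by simp
      from inner[OF this] show ?thesis by (rule sym)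
    qed
    thus "A q (args y (h ` J)) * (\<Sum>V'\<in>disj_families (h ` J) (h ` N - h ` J). \<Prod>k\<in>h ` J. tz t (y k) y (V' k)) =
         A q (args (y \<circ> h) J) * (\<Sum>V\<in>disj_families J (N - J). \<Prod>j\<in>J. tz t ((y \<circ> h) j) (y \<circ> h) (V j))"
      by (simp only: eA eI)
  qed
  finally show ?thesis by (rule sym)
qed

lemma part_image:
  assumes P: "partition_on A P" and inj: "inj_on h A"
  shows "partition_on (h ` A) (image h ` P)"
proof -
  have "(`) h ` P - {{}} = image h ` P" using partition_onD3[OF P] by auto
  thus ?thesis using partition_on_inj_image[OF P inj] by simp
qed

lemma part_reindex:
  assumes bij: "bij_betw h A B"
  shows "(\<Sum>P\<in>{P. partition_on A P}. F (image h ` P)) = (\<Sum>Q\<in>{Q. partition_on B Q}. F Q)"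
proof -
  have inj: "inj_on h A" and hA: "h ` A = B" using bij by (auto simp: bij_betw_def)
  define g where "g = the_inv_into A h"
  have bijg: "bij_betw g B A" unfolding g_def using bij by (rule bij_betw_the_inv_into)
  have injg: "inj_on g B" and gB: "g ` B = A" using bijg by (auto simp: bij_betw_def)
  have hg: "y \<in> B \<Longrightarrow> h (g y) = y" for y unfolding g_def using f_the_inv_into_f[OF inj] hA by blast
  have inj2: "inj_on (image (image h)) {P. partition_on A P}"
  proof (rule inj_on_subset[OF inj_on_image_Pow[OF inj_on_image_Pow[OF inj]]])
    show "{P. partition_on A P} \<subseteq> Pow (Pow A)" by (auto simp: partition_on_def)
  qed
  have img: "image (image h) ` {P. partition_on A P} = {Q. partition_on B Q}"
  proof
    show "image (image h) ` {P. partition_on A P} \<subseteq> {Q. partition_on B Q}"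
    proof clarify
      fix P assume "partition_on A P"
      from part_image[OF this inj] show "partition_on B (image h ` P)" by (simp only: hA)
    qed
    show "{Q. partition_on B Q} \<subseteq> image (image h) ` {P. partition_on A P}"
    proof clarify
      fix Q assume Q: "partition_on B Q"
      have P: "partition_on A (image g ` Q)" using part_image[OF Q injg] gB by simp
      have "image h ` image g ` Q = Q"
      proof -
        have hgX: "h ` g ` X = X" if "X \<in> Q" for X
        proof -
          have XB: "X \<subseteq> B" using that partition_onD1[OF Q] by blast
          have "h ` g ` X = (\<lambda>x. h (g x)) ` X" by (simp only: image_image)
          also have "\<dots> = (\<lambda>x. x) ` X" by (rule image_cong[OF refl]) (use hg XB in blast)
          finally show ?thesis by simp
        qed
        have "image h ` image g ` Q = (\<lambda>X. h ` g ` X) ` Q" by (simp only: image_image)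
        also have "\<dots> = (\<lambda>X. X) ` Q" by (rule image_cong[OF refl]) (rule hgX)
        finally show ?thesis by simp
      qed
      hence "Q = image (image h) (image g ` Q)" by simp
      moreover have "image g ` Q \<in> {P. partition_on A P}" using P by simp
      ultimately show "Q \<in> image (image h) ` {P. partition_on A P}" by (rule image_eqI)
    qed
  qed
  have "sum F (image (image h) ` {P. partition_on A P}) = sum (F \<circ> image (image h)) {P. partition_on A P}"
    by (rule sum.reindex[OF inj2])
  hence "sum F {Q. partition_on B Q} = sum (F \<circ> image (image h)) {P. partition_on A P}"
    by (simp only: img)
  thus ?thesis by (simp only: comp_def)
qed

lemma FPgen:
  assumes symA: "\<forall>q xs ys. mset xs = mset ys \<longrightarrow> A q xs = A q ys"
    and symt: "\<forall>q xs ys. mset xs = mset ys \<longrightarrow> t q xs = t q ys"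
    and FP: "\<forall>q xs. xs \<noteq> [] \<longrightarrow> t q xs = FP_rhs A t q xs"
    and fS: "finite S" and Sne: "S \<noteq> {}"
  shows "t q (args y S) = (\<Sum>Q\<in>{Q. partition_on S Q}. \<Prod>N\<in>Q. Bfun A t q y N)"
proof -
  define s where "s = sorted_list_of_set S"
  define xs where "xs = args y S"
  define m where "m = card S"
  have lens: "length s = m" unfolding s_def m_def by simp
  have len: "length xs = m" unfolding xs_def args_def s_def m_def by simp
  have mpos: "m > 0" using fS Sne unfolding m_def by (simp add: card_gt_0_iff)
  hence xsne: "xs \<noteq> []" using len by auto
  define y' where "y' = (\<lambda>i. (q # xs) ! i)"
  define h where "h = (\<lambda>i. s ! (i - 1))"
  have dist: "distinct s" unfolding s_def by simp
  have sS: "set s = S" unfolding s_def using fS by simp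
  have injh: "inj_on h {1..m}"
  proof (rule inj_onI)
    fix i j assume i: "i \<in> {1..m}" and j: "j \<in> {1..m}" and e: "h i = h j"
    have "i - 1 < length s" "j - 1 < length s" using i j lens by auto
    hence "i - 1 = j - 1" using e dist nth_eq_iff_index_eq unfolding h_def by blast
    thus "i = j" using i j by auto
  qed
  have imgh: "h ` {1..m} = S"
  proof
    show "h ` {1..m} \<subseteq> S" using lens sS unfolding h_def by (auto intro!: nth_mem)
    show "S \<subseteq> h ` {1..m}"
    proof
      fix x assume "x \<in> S"
      then obtain k where k: "k < length s" "s ! k = x" using sS by (metis in_set_conv_nth)
      hence "h (Suc k) = x" "Suc k \<in> {1..m}" using lens unfolding h_def by auto
      thus "x \<in> h ` {1..m}" by (metis image_eqI)
    qed
  qed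
  have bij: "bij_betw h {1..m} S" using injh imgh by (simp add: bij_betw_def)
  have y'h: "y' i = (y \<circ> h) i" if iI: "i \<in> {1..m}" for i
  proof -
    obtain k where k: "i = Suc k" using iI by (cases i) auto
    have "k < length s" using k iI lens by auto
    thus ?thesis unfolding y'_def h_def xs_def args_def s_def[symmetric] using k by simp
  qed
  have "t q xs = FP_rhs A t q xs" using FP xsne by blast
  also have "\<dots> = (\<Sum>P\<in>{P. partition_on {1..m} P}. \<Prod>J\<in>P. Bfun A t q y' J)"
    unfolding FP_rhs_def y'_def len by simp
  also have "\<dots> = (\<Sum>P\<in>{P. partition_on {1..m} P}. \<Prod>N\<in>image h ` P. Bfun A t q y N)"
  proof (rule sum.cong[OF refl])
    fix P assume P: "P \<in> {P. partition_on {1..m} P}"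
    have sub: "J \<subseteq> {1..m}" if "J \<in> P" for J using P that partition_onD1 by blast
    have injP: "inj_on (image h) P"
      using inj_on_image_Pow[OF injh] by (rule inj_on_subset) (use sub in auto)
    have "(\<Prod>J\<in>P. Bfun A t q y' J) = (\<Prod>J\<in>P. Bfun A t q y (h ` J))"
    proof (rule prod.cong[OF refl])
      fix J assume J: "J \<in> P"
      have fJ: "finite J" using sub[OF J] finite_subset by blast
      have "Bfun A t q y' J = Bfun A t q (y \<circ> h) J"
        using Bfun_local[OF fJ, of y' "y \<circ> h"] y'h sub[OF J] by blast
      also have "\<dots> = Bfun A t q y (h ` J)"
        using Bfun_img[OF symA symt fJ inj_on_subset[OF injh sub[OF J]]] .
      finally show "Bfun A t q y' J = Bfun A t q y (h ` J)" .
    qed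
    also have "\<dots> = (\<Prod>N\<in>image h ` P. Bfun A t q y N)"
      using prod.reindex[OF injP, of "Bfun A t q y"] by (simp only: comp_def)
    finally show "(\<Prod>J\<in>P. Bfun A t q y' J) = (\<Prod>N\<in>image h ` P. Bfun A t q y N)" .
  qed
  also have "\<dots> = (\<Sum>Q\<in>{Q. partition_on S Q}. \<Prod>N\<in>Q. Bfun A t q y N)"
    using part_reindex[OF bij, of "\<lambda>Q. \<Prod>N\<in>Q. Bfun A t q y N"] .
  finally show ?thesis unfolding xs_def .
qed

lemma GTP_empty: "GTP r {} = {\<lambda>_. {}}"
proof
  show "GTP r {} \<subseteq> {\<lambda>_. {}}"
  proof
    fix P assume "P \<in> GTP r {}"
    hence v: "valid r {} P" by (simp add: GTP_def)
    have "P i = {}" for i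
    proof (cases "i = r")
      case True
      show ?thesis using validD(2,3)[OF v, of _ i] by blast
    next
      case False
      thus ?thesis using validD(1)[OF v, of i] by simp
    qed
    thus "P \<in> {\<lambda>_. {}}" by auto
  qed
  show "{\<lambda>_. {}} \<subseteq> GTP r {}" by (simp add: GTP_def valid_def)
qed

lemma wt_empty: "wt a (\<lambda>_. {}) = 1"
  by (simp add: wt_def bl_def)

lemma main_ind:
  assumes symA: "\<forall>q xs ys. mset xs = mset ys \<longrightarrow> A q xs = A q ys"
    and symt: "\<forall>q xs ys. mset xs = mset ys \<longrightarrow> t q xs = t q ys"
    and FP: "\<forall>q xs. xs \<noteq> [] \<longrightarrow> t q xs = FP_rhs A t q xs"
  shows "finite S \<Longrightarrow> r \<notin> S \<Longrightarrow> tz t (y r) y S = (\<Sum>P\<in>GTP r S. wt (\<lambda>i J. A (y i) (args y J)) P)"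
proof (induction "card S" arbitrary: S r rule: less_induct)
  case less
  let ?a = "\<lambda>i J. A (y i) (args y J)"
  have IH: "\<And>S' r'. card S' < card S \<Longrightarrow> finite S' \<Longrightarrow> r' \<notin> S' \<Longrightarrow>
      tz t (y r') y S' = (\<Sum>P\<in>GTP r' S'. wt ?a P)"
    using less.hyps by blast
  show ?case
  proof (cases "S = {}")
    case True
    thus ?thesis by (simp add: tz_def GTP_empty wt_empty)
  next
    case False
    have "tz t (y r) y S = t (y r) (args y S)" by (simp add: tz_def False)
    also have "\<dots> = (\<Sum>Q\<in>{Q. partition_on S Q}. \<Prod>N\<in>Q. Bfun A t (y r) y N)"
      by (rule FPgen[OF symA symt FP less.prems(1) False])
    also have "\<dots> = (\<Sum>Q\<in>{Q. partition_on S Q}. \<Prod>N\<in>Q. \<Sum>P\<in>BTP r N. wt ?a P)"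
    proof (intro sum.cong[OF refl] prod.cong[OF refl])
      fix Q N assume Q: "Q \<in> {Q. partition_on S Q}" and N: "N \<in> Q"
      have NS: "N \<subseteq> S" using Q N partition_onD1 by blast
      have fN: "finite N" using NS less.prems(1) finite_subset by blast
      have rN: "r \<notin> N" using NS less.prems(2) by blast
      have "Bfun A t (y r) y N = (\<Sum>J\<in>{J. J \<subseteq> N \<and> J \<noteq> {}}. ?a r J *
            (\<Sum>V\<in>disj_families J (N - J). \<Prod>j\<in>J. \<Sum>P\<in>GTP j (V j). wt ?a P))"
        unfolding Bfun_def
      proof (intro sum.cong[OF refl] arg_cong2[where f="(*)"] refl prod.cong)
        fix J V j assume J: "J \<in> {J. J \<subseteq> N \<and> J \<noteq> {}}" and V: "V \<in> disj_families J (N - J)" and j: "j \<in> J"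
        have VS: "V j \<subseteq> S - {j}" using disjD(4)[OF V j] NS J j by blast
        have jS: "j \<in> S" using j J NS by blast
        have "V j \<subset> S" using VS jS by blast
        hence c: "card (V j) < card S" using less.prems(1) by (rule psubset_card_mono[rotated])
        have fV: "finite (V j)" using VS less.prems(1) finite_subset by blast
        show "tz t (y j) y (V j) = (\<Sum>P\<in>GTP j (V j). wt ?a P)"
          using IH[OF c fV] VS by blast
      qed
      also have "\<dots> = (\<Sum>P\<in>BTP r N. wt ?a P)" by (rule L2[OF rN fN, symmetric])
      finally show "Bfun A t (y r) y N = (\<Sum>P\<in>BTP r N. wt ?a P)" .
    qed
    also have "\<dots> = (\<Sum>P\<in>GTP r S. wt ?a P)" by (rule L1[OF less.prems(2,1), symmetric])
    finally show ?thesis .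
  qed
qed

lemma ET_D:
  assumes "(par, P) \<in> enriched_trees n"
  shows "\<And>i. i \<in> {1..n} \<Longrightarrow> par i \<in> {0..n}"
    and "\<And>i. i \<in> {1..n} \<Longrightarrow> \<exists>k. (par ^^ k) i = 0"
    and "\<And>j. j \<notin> {1..n} \<Longrightarrow> par j = 0"
    and "\<And>i. i \<in> {0..n} \<Longrightarrow> partition_on (children n par i) (P i)"
    and "\<And>i. i \<notin> {0..n} \<Longrightarrow> P i = {}"
  using assms unfolding enriched_trees_def rooted_trees_def by auto

lemma ET_blk:
  assumes E: "(par, P) \<in> enriched_trees n" and J: "J \<in> P i"
  shows "i \<in> {0..n}" "J \<noteq> {}" "J \<subseteq> children n par i"
proof -
  show i: "i \<in> {0..n}" using ET_D(5)[OF E, of i] J by (metis empty_iff)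
  show "J \<noteq> {}" using partition_onD3[OF ET_D(4)[OF E i]] J by blast
  show "J \<subseteq> children n par i" using partition_onD1[OF ET_D(4)[OF E i]] J by blast
qed

lemma ET_edge:
  assumes E: "(par, P) \<in> enriched_trees n" and u: "u \<in> {1..n}"
  shows "edge P (par u) u"
proof -
  have p: "par u \<in> {0..n}" using ET_D(1)[OF E u] .
  have "u \<in> children n par (par u)" using u by (simp add: children_def)
  hence "u \<in> \<Union>(P (par u))" using partition_onD1[OF ET_D(4)[OF E p]] by blast
  thus ?thesis by (auto simp: edge_def)
qed

lemma ET_valid:
  assumes E: "(par, P) \<in> enriched_trees n"
  shows "valid 0 {1..n} P"
  unfolding valid_def
proof (intro conjI allI impI ballI)
  fix i assume "i \<notin> insert 0 {1..n}"
  thus "P i = {}" using ET_D(5)[OF E, of i] by auto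
next
  fix i J assume "J \<in> P i" thus "J \<noteq> {}" using ET_blk[OF E] by blast
next
  fix i J assume "J \<in> P i" thus "J \<subseteq> {1..n}" using ET_blk(3)[OF E] by (force simp: children_def)
next
  fix i i' J J' assume J: "J \<in> P i" and J': "J' \<in> P i'" and JJ: "J \<inter> J' \<noteq> {}"
  then obtain v where v: "v \<in> J" "v \<in> J'" by blast
  have "par v = i" using ET_blk(3)[OF E J] v(1) by (auto simp: children_def)
  moreover have "par v = i'" using ET_blk(3)[OF E J'] v(2) by (auto simp: children_def)
  ultimately have ii: "i = i'" by simp
  thus "i = i'" .
  show "J = J'" using partition_disj[OF ET_D(4)[OF E ET_blk(1)[OF E J]] J] J' ii JJ by blast
next
  fix v assume v: "v \<in> {1..n}"
  have "\<forall>i. i \<in> {0..n} \<longrightarrow> (par ^^ k) i = 0 \<longrightarrow> (edge P)\<^sup>*\<^sup>* 0 i" for k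
  proof (induction k)
    case 0
    then show ?case by simp
  next
    case (Suc k)
    show ?case
    proof (intro allI impI)
      fix i assume i: "i \<in> {0..n}" and e: "(par ^^ Suc k) i = 0"
      show "(edge P)\<^sup>*\<^sup>* 0 i"
      proof (cases "i = 0")
        case True thus ?thesis by simp
      next
        case False
        hence i1: "i \<in> {1..n}" using i by auto
        have "(par ^^ k) (par i) = 0" using e by (simp only: funpow_Suc_right comp_def)
        hence "(edge P)\<^sup>*\<^sup>* 0 (par i)" using Suc.IH ET_D(1)[OF E i1] by blast
        thus ?thesis using ET_edge[OF E i1] by (rule rtranclp.rtrancl_into_rtrancl)
      qed
    qed
  qed
  thus "(edge P)\<^sup>*\<^sup>* 0 v" using ET_D(2)[OF E v] v by fastforce
qed

lemma ET_inj: "inj_on snd (enriched_trees n)"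
proof (rule inj_onI)
  fix x y assume x: "x \<in> enriched_trees n" and y: "y \<in> enriched_trees n" and e: "snd x = snd y"
  obtain par P where xe: "x = (par, P)" by (cases x) auto
  obtain par' where ye: "y = (par', P)" using e xe by (cases y) auto
  have E: "(par, P) \<in> enriched_trees n" using x xe by simp
  have E': "(par', P) \<in> enriched_trees n" using y ye by simp
  have "par j = par' j" for j
  proof (cases "j \<in> {1..n}")
    case True
    obtain J where J: "J \<in> P (par' j)" "j \<in> J" using ET_edge[OF E' True] by (auto simp: edge_def)
    show ?thesis using ET_blk(3)[OF E J(1)] J(2) by (auto simp: children_def)
  next
    case False
    thus ?thesis using ET_D(3)[OF E] ET_D(3)[OF E'] by simp
  qed
  thus "x = y" using xe ye by auto
qed

lemma ET_surj:
  assumes v: "valid 0 {1..n} P"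
  shows "\<exists>par. (par, P) \<in> enriched_trees n"
proof -
  define par where "par j = (if j \<in> {1..n} then (THE i. edge P i j) else 0)" for j
  have ex: "\<exists>i. edge P i j" if j: "j \<in> {1..n}" for j
  proof -
    have "(edge P)\<^sup>*\<^sup>* 0 j" using validD(5)[OF v j] .
    thus ?thesis
    proof (cases rule: rtranclp.cases)
      case rtrancl_refl thus ?thesis using j by simp
    next
      case (rtrancl_into_rtrancl c) thus ?thesis by blast
    qed
  qed
  have pe: "edge P (par j) j" if j: "j \<in> {1..n}" for j
  proof -
    have "\<exists>!i. edge P i j" using ex[OF j] valid_parent_unique[OF v] by blast
    hence "edge P (THE i. edge P i j) j" by (rule theI')
    thus ?thesis using j by (simp add: par_def)
  qed
  have pu: "edge P i j \<Longrightarrow> par j = i" for i j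
  proof -
    assume e: "edge P i j"
    hence j: "j \<in> {1..n}" using valid_edge_in[OF v] by blast
    thus ?thesis using pe[OF j] e valid_parent_unique[OF v] by blast
  qed
  have iter: "(edge P)\<^sup>*\<^sup>* 0 w \<Longrightarrow> \<exists>k. (par ^^ k) w = 0" for w
  proof (induction rule: rtranclp_induct)
    case base
    have "(par ^^ 0) 0 = 0" by simp
    thus ?case by blast
  next
    case (step u w)
    then obtain k where k: "(par ^^ k) u = 0" by blast
    have "(par ^^ Suc k) w = (par ^^ k) (par w)" by (simp only: funpow_Suc_right comp_def)
    also have "\<dots> = 0" using pu[OF step(2)] k by simp
    finally show ?case by blast
  qed
  have rt: "par \<in> rooted_trees n"
    unfolding rooted_trees_def
  proof (intro CollectI conjI ballI allI impI)
    fix i assume i: "i \<in> {1..n}"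
    show "par i \<in> {0..n}" using valid_edge_in[OF v pe[OF i]] by auto
    show "\<exists>k. (par ^^ k) i = 0" using iter validD(5)[OF v i] by blast
  next
    fix j assume "j \<notin> {1..n}" thus "par j = 0" unfolding par_def by (rule if_not_P)
  qed
  have ch: "children n par i = \<Union>(P i)" for i
  proof
    show "children n par i \<subseteq> \<Union>(P i)"
    proof
      fix j assume "j \<in> children n par i"
      hence j: "j \<in> {1..n}" "par j = i" by (auto simp: children_def)
      thus "j \<in> \<Union>(P i)" using pe[OF j(1)] by (auto simp: edge_def)
    qed
    show "\<Union>(P i) \<subseteq> children n par i"
    proof
      fix j assume "j \<in> \<Union>(P i)"
      hence e: "edge P i j" by (auto simp: edge_def)
      thus "j \<in> children n par i" using pu[OF e] valid_edge_in[OF v e] by (simp add: children_def)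
    qed
  qed
  have pt: "partition_on (children n par i) (P i)" for i
    unfolding ch
  proof (rule partition_onI)
    fix p q assume "p \<in> P i" "q \<in> P i" "p \<noteq> q"
    thus "disjnt p q" using validD(4)[OF v, of p i q i] unfolding disjnt_def by blast
  next
    show "{} \<notin> P i" using validD(2)[OF v] by blast
  qed simp
  have "(par, P) \<in> enriched_trees n"
    unfolding enriched_trees_def using rt pt validD(1)[OF v] by auto
  thus ?thesis by blast
qed

lemma tw_eq:
  assumes v: "valid 0 {1..n} P"
  shows "tree_weight A n P xs0 = wt (\<lambda>i J. A (xs0 ! i) (args (\<lambda>j. xs0 ! j) J)) P"
proof -
  have fin: "\<forall>i\<in>{0..n}. finite (P i)"
    using validD(3)[OF v] by (meson finite_Pow_iff finite_atLeastAtMost finite_subset subsetI PowI)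
  have "Sigma {0..n} P = bl P"
  proof (rule equalityI)
    show "Sigma {0..n} P \<subseteq> bl P" unfolding bl_def by blast
    show "bl P \<subseteq> Sigma {0..n} P"
    proof
      fix x assume x: "x \<in> bl P"
      obtain i J where xe: "x = (i, J)" by (cases x)
      have J: "J \<in> P i" using x xe by (simp add: bl_def)
      have "i \<in> insert 0 {1..n}" using validD(1)[OF v, of i] J by (metis empty_iff)
      hence "i \<in> {0..n}" by auto
      thus "x \<in> Sigma {0..n} P" using J xe by simp
    qed
  qed
  thus ?thesis unfolding tree_weight_def wt_def using prod.Sigma[OF _ fin] by simp
qed

theorem mainTheorem4:
  fixes A :: "'a \<Rightarrow> 'a list \<Rightarrow> complex" and t :: "'a \<Rightarrow> 'a list \<Rightarrow> complex"
  assumes symA: "\<forall>q xs ys. mset xs = mset ys \<longrightarrow> A q xs = A q ys"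
    and symt: "\<forall>q xs ys. mset xs = mset ys \<longrightarrow> t q xs = t q ys"
    and FP: "\<forall>q xs. xs \<noteq> [] \<longrightarrow> t q xs = FP_rhs A t q xs"
  shows "\<forall>q xs. xs \<noteq> [] \<longrightarrow>
           t q xs = (\<Sum>(par, P)\<in>enriched_trees (length xs). tree_weight A (length xs) P (q # xs))"
proof (intro allI impI)
  fix q and xs :: "'a list"
  assume xsne: "xs \<noteq> []"
  define n where "n = length xs"
  define y where "y = (\<lambda>i. (q # xs) ! i)"
  let ?a = "\<lambda>i J. A (y i) (args y J)"
  have Sne: "{1..n} \<noteq> {}" using xsne unfolding n_def by (cases xs) auto
  have sl: "sorted_list_of_set {1..n} = [1..<Suc n]"
    by (metis atLeastLessThanSuc_atLeastAtMost sorted_list_of_set_range)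
  have ar: "args y {1..n} = xs"
    unfolding args_def sl unfolding y_def n_def by (rule nth_equalityI) (simp_all del: upt_Suc add: nth_upt)
  have "t q xs = tz t (y 0) y {1..n}" using Sne ar by (simp add: tz_def y_def)
  also have "\<dots> = (\<Sum>P\<in>GTP 0 {1..n}. wt ?a P)"
    by (rule main_ind[OF symA symt FP]) auto
  also have "\<dots> = (\<Sum>P\<in>snd ` enriched_trees n. tree_weight A n P (q # xs))"
  proof -
    have img: "snd ` enriched_trees n = GTP 0 {1..n}"
    proof
      show "snd ` enriched_trees n \<subseteq> GTP 0 {1..n}"
        using ET_valid by (force simp: GTP_def)
      show "GTP 0 {1..n} \<subseteq> snd ` enriched_trees n"
      proof
        fix P assume "P \<in> GTP 0 {1..n}"
        then obtain par where "(par, P) \<in> enriched_trees n" using ET_surj by (auto simp: GTP_def)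
        thus "P \<in> snd ` enriched_trees n" by (metis image_eqI snd_conv)
      qed
    qed
    show ?thesis unfolding img
      by (rule sum.cong[OF refl]) (simp add: tw_eq GTP_def y_def)
  qed
  also have "\<dots> = (\<Sum>x\<in>enriched_trees n. tree_weight A n (snd x) (q # xs))"
    using sum.reindex[OF ET_inj, of "\<lambda>P. tree_weight A n P (q # xs)" n] by (simp add: comp_def)
  also have "\<dots> = (\<Sum>(par, P)\<in>enriched_trees n. tree_weight A n P (q # xs))"
    by (simp add: case_prod_unfold)
  finally show "t q xs = (\<Sum>(par, P)\<in>enriched_trees (length xs). tree_weight A (length xs) P (q # xs))"
    unfolding n_def .
qed

end
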